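(* Let $p_n=3n$ and $\mathcal D_n=\{0,2,3n^2+1\}$ for all $n\ge1$. Then the Cantor-Moran measure $\mu_{\{p_n,\mathcal D_n\}}=\delta_{p_1^{-1}\mathcal D_1}*\delta_{(p_1p_2)^{-1}\mathcal D_2}*\cdots$ (for which $\sup_n\max\{p_n^{-1}d:d\in\mathcal D_n\}=\infty$) is a spectral measure.
   Context: For finite $A\subset\mathbb R$, $\delta_A=\frac{1}{\#A}\sum_{a\in A}\delta_a$. The Cantor-Moran measure $\mu_{\{p_n,\mathcal D_n\}}$ is the weak limit of $\delta_{p_1^{-1}\mathcal D_1}*\cdots*\delta_{(p_1\cdots p_n)^{-1}\mathcal D_n}$. A probability measure $\mu$ is spectral if there is a countable $\Lambda\subset\mathbb R$ with $\{e^{2\pi i\lambda x}\}_{\lambda\in\Lambda}$ an orthogonal basis of $L^2(\mu)$. *)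

theory Defs
  imports "HOL-Probability.Probability"
begin

definition delta_set :: "real set \<Rightarrow> real measure" where
  "delta_set A = distr (uniform_count_measure A) borel (\<lambda>x. x)"

definition moran_prod :: "(nat \<Rightarrow> nat) \<Rightarrow> nat \<Rightarrow> nat" where
  "moran_prod p n = (\<Prod>k=1..n. p k)"

fun moran_conv :: "(nat \<Rightarrow> nat) \<Rightarrow> (nat \<Rightarrow> int set) \<Rightarrow> nat \<Rightarrow> real measure" where
  "moran_conv p D 0 = return borel 0"
| "moran_conv p D (Suc n) =
     convolution (moran_conv p D n)
       (delta_set ((\<lambda>d. real_of_int d / real (moran_prod p (Suc n))) ` D (Suc n)))"

definition is_cantor_moran_measure ::
    "(nat \<Rightarrow> nat) \<Rightarrow> (nat \<Rightarrow> int set) \<Rightarrow> real measure \<Rightarrow> bool" where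
  "is_cantor_moran_measure p D \<mu> \<longleftrightarrow>
     sets \<mu> = sets borel \<and> prob_space \<mu> \<and> weak_conv_m (moran_conv p D) \<mu>"

definition exp_fun :: "real \<Rightarrow> real \<Rightarrow> complex" where
  "exp_fun l x = exp (2 * of_real pi * \<i> * of_real (l * x))"

definition exp_orthogonal_basis :: "real measure \<Rightarrow> real set \<Rightarrow> bool" where
  "exp_orthogonal_basis \<mu> \<Lambda> \<longleftrightarrow>
     (\<forall>l\<in>\<Lambda>. \<forall>l'\<in>\<Lambda>. l \<noteq> l' \<longrightarrow>
        (\<integral>x. exp_fun l x * cnj (exp_fun l' x) \<partial>\<mu>) = 0) \<and>
     (\<forall>f :: real \<Rightarrow> complex.
        f \<in> borel_measurable \<mu> \<and> integrable \<mu> (\<lambda>x. (cmod (f x))\<^sup>2) \<and>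
        (\<forall>l\<in>\<Lambda>. (\<integral>x. f x * cnj (exp_fun l x) \<partial>\<mu>) = 0)
        \<longrightarrow> (AE x in \<mu>. f x = 0))"

definition spectral_measure :: "real measure \<Rightarrow> bool" where
  "spectral_measure \<mu> \<longleftrightarrow> prob_space \<mu> \<and>
     (\<exists>\<Lambda>::real set. countable \<Lambda> \<and> exp_orthogonal_basis \<mu> \<Lambda>)"

end

theory Submission
  imports Defs
begin



definition PP :: "nat \<Rightarrow> real" where "PP k = 3^k * fact k"
definition Dg :: "nat \<Rightarrow> real" where "Dg k = 3 * (real k)^2 + 1"
definition mm :: "nat \<Rightarrow> real \<Rightarrow> complex" where
  "mm k u = (1 + iexp (2*u) + iexp (Dg k * u)) / 3"

lemma PP_pos: "PP k > 0" by (simp add: PP_def)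
lemma PP_Suc: "PP (Suc k) = 3 * (Suc k) * PP k"
  by (simp add: PP_def algebra_simps)

lemma moran_prod_eq:
  assumes "\<And>n. n \<ge> 1 \<Longrightarrow> p n = 3 * n"
  shows "real (moran_prod p k) = PP k"
proof (induction k)
  case 0 then show ?case by (simp add: moran_prod_def PP_def)
next
  case (Suc k)
  have "moran_prod p (Suc k) = moran_prod p k * p (Suc k)"
    by (simp add: moran_prod_def prod.nat_ivl_Suc')
  then show ?case using Suc assms[of "Suc k"] by (simp add: PP_Suc algebra_simps)
qed

lemma real_distribution_delta_set:
  assumes "finite A" "A \<noteq> {}"
  shows "real_distribution (delta_set A)"
proof -
  interpret prob_space "uniform_count_measure A"
    using assms by (rule prob_space_uniform_count_measure)
  show ?thesis unfolding delta_set_def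
    by (rule real_distribution_distr) simp
qed

lemma char_delta_set:
  assumes "finite A" "A \<noteq> {}"
  shows "char (delta_set A) t = (\<Sum>a\<in>A. iexp (t * a)) / card A"
proof -
  have "char (delta_set A) t = (\<integral>x. iexp (t*x) \<partial>uniform_count_measure A)"
    unfolding char_def delta_set_def by (subst integral_distr) auto
  also have "\<dots> = (\<Sum>a\<in>A. (1 / card A) *\<^sub>R iexp (t * a))"
    unfolding uniform_count_measure_def
    by (rule lebesgue_integral_point_measure_finite) (auto simp: assms)
  also have "\<dots> = (\<Sum>a\<in>A. iexp (t * a)) / card A"
    by (simp add: sum_divide_distrib scaleR_conv_of_real)
  finally show ?thesis .
qed

lemma real_distribution_convolution:
  assumes "real_distribution M" "real_distribution N"
  shows "real_distribution (convolution M N)"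
proof -
  interpret M: real_distribution M by fact
  interpret N: real_distribution N by fact
  interpret MN: pair_prob_space M N ..
  show ?thesis unfolding convolution_def
    by (rule MN.real_distribution_distr) simp
qed

lemma char_convolution:
  assumes "real_distribution M" "real_distribution N"
  shows "char (convolution M N) t = char M t * char N t"
proof -
  interpret M: real_distribution M by fact
  interpret N: real_distribution N by fact
  interpret MN: pair_prob_space M N ..
  have "char (convolution M N) t = (\<integral>z. iexp (t * (fst z + snd z)) \<partial>(M \<Otimes>\<^sub>M N))"
    unfolding char_def convolution_def
    by (subst integral_distr) (auto simp: case_prod_beta)
  also have "\<dots> = (\<integral>x. \<integral>y. iexp (t * (fst (x,y) + snd (x,y))) \<partial>N \<partial>M)"
    by (rule MN.integral_fst'[symmetric]) (auto intro!: MN.integrable_const_bound[where B=1])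
  also have "\<dots> = (\<integral>x. iexp (t*x) * char N t \<partial>M)"
    unfolding char_def by (simp add: distrib_left exp_add mult.assoc)
  also have "\<dots> = char M t * char N t"
    unfolding char_def by simp
  finally show ?thesis .
qed

lemma Dg_ge: "k \<ge> 1 \<Longrightarrow> Dg k \<ge> 4"
proof -
  assume "k \<ge> 1"
  then have "real k \<ge> 1" by simp
  then have "(real k)^2 \<ge> 1" by (simp add: one_le_power)
  then show ?thesis by (simp add: Dg_def)
qed

locale moran =
  fixes p :: "nat \<Rightarrow> nat" and D :: "nat \<Rightarrow> int set"
  assumes p_eq: "\<And>n. n \<ge> 1 \<Longrightarrow> p n = 3 * n"
      and D_eq: "\<And>n. n \<ge> 1 \<Longrightarrow> D n = {0, 2, 3 * int n ^ 2 + 1}"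
begin

lemma mp: "real (moran_prod p k) = PP k"
  by (rule moran_prod_eq) (rule p_eq)

lemma digit_image:
  assumes "k \<ge> 1"
  shows "(\<lambda>d. real_of_int d / real (moran_prod p k)) ` D k = {0, 2 / PP k, Dg k / PP k}"
  using assms by (simp add: D_eq mp Dg_def)

lemma char_digit:
  assumes "k \<ge> 1"
  shows "char (delta_set ((\<lambda>d. real_of_int d / real (moran_prod p k)) ` D k)) t = mm k (t / PP k)"
    and "real_distribution (delta_set ((\<lambda>d. real_of_int d / real (moran_prod p k)) ` D k))"
proof -
  have P: "PP k > 0" by (rule PP_pos)
  have Dg4: "Dg k \<ge> 4" using Dg_ge assms by simp
  have d1: "0 \<noteq> 2 / PP k" using P by simp
  have d2: "0 \<noteq> Dg k / PP k" using P Dg4 by simp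
  have d3: "2 / PP k \<noteq> Dg k / PP k" using P Dg4 by (simp add: divide_cancel_right)
  show "char (delta_set ((\<lambda>d. real_of_int d / real (moran_prod p k)) ` D k)) t = mm k (t / PP k)"
    unfolding digit_image[OF assms]
    by (subst char_delta_set) (use d1 d2 d3 in \<open>auto simp: mm_def algebra_simps\<close>)
  show "real_distribution (delta_set ((\<lambda>d. real_of_int d / real (moran_prod p k)) ` D k))"
    unfolding digit_image[OF assms] by (rule real_distribution_delta_set) auto
qed

lemma moran_conv_char:
  "real_distribution (moran_conv p D n) \<and> char (moran_conv p D n) t = (\<Prod>k=1..n. mm k (t / PP k))"
proof (induction n)
  case 0
  have "real_distribution (return borel (0::real))"
    by (simp add: real_distribution_def real_distribution_axioms_def prob_space_return)
  then show ?case by (simp add: char_def integral_return)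
next
  case (Suc n)
  have rd: "real_distribution (moran_conv p D (Suc n))"
    using Suc real_distribution_convolution char_digit(2)[of "Suc n"] by simp
  have "char (moran_conv p D (Suc n)) t = (\<Prod>k=1..n. mm k (t / PP k)) * mm (Suc n) (t / PP (Suc n))"
    using Suc char_convolution char_digit[of "Suc n"] by simp
  then show ?case using rd by (simp add: prod.nat_ivl_Suc')
qed

end




lemma cos_shift_int: "cos (x + 2 * pi * of_int n) = cos x"
  by (simp add: cos_add)

lemma cos3_1: "cos (x - 2*pi/3) + cos x + cos (x + 2*pi/3) = 0"
  by (simp add: cos_diff cos_add cos_120)

lemma cos3_2: "cos (x - 4*pi/3) + cos x + cos (x + 4*pi/3) = 0"
proof -
  have c: "cos (4*pi/3) = -1/2"
    using cos_periodic_pi[of "pi/3"] cos_60 by (simp add: field_simps)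
  have s: "sin (4*pi/3) = - sin (pi/3)"
    using sin_periodic_pi[of "pi/3"] by (simp add: field_simps)
  show ?thesis by (simp add: cos_diff cos_add c)
qed

lemma cos3_int:
  fixes m :: int and x :: real
  assumes "\<not> 3 dvd m"
  shows "cos (of_int m*(x - 2*pi/3)) + cos (of_int m*x) + cos (of_int m*(x + 2*pi/3)) = 0"
proof -
  obtain q r where qr: "m = 3*q + r" "r = 1 \<or> r = 2"
  proof -
    have "m = 3*(m div 3) + m mod 3" by simp
    moreover have "m mod 3 = 1 \<or> m mod 3 = 2" using assms by presburger
    ultimately show ?thesis using that by blast
  qed
  then show ?thesis
  proof (elim disjE)
    assume r: "r = 1"
    have e1: "of_int m*(x - 2*pi/3) = (of_int m*x - 2*pi/3) + 2*pi * of_int (-q)" using qr r by (simp add: algebra_simps)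
    have e2: "of_int m*(x + 2*pi/3) = (of_int m*x + 2*pi/3) + 2*pi * of_int q" using qr r by (simp add: algebra_simps)
    show ?thesis unfolding e1 e2 cos_shift_int by (rule cos3_1)
  next
    assume r: "r = 2"
    have e1: "of_int m*(x - 2*pi/3) = (of_int m*x - 4*pi/3) + 2*pi * of_int (-q)" using qr r by (simp add: algebra_simps)
    have e2: "of_int m*(x + 2*pi/3) = (of_int m*x + 4*pi/3) + 2*pi * of_int q" using qr r by (simp add: algebra_simps)
    show ?thesis unfolding e1 e2 cos_shift_int by (rule cos3_2)
  qed
qed

definition gg :: "nat \<Rightarrow> real \<Rightarrow> real" where "gg k u = (cmod (mm k u))^2"

lemma iexp_cis: "iexp x = cis x" by (simp add: cis_conv_exp)

lemma gg_formula:
  "gg k u = (3 + 2*cos(2*u) + 2*cos(Dg k*u) + 2*cos((Dg k - 2)*u)) / 9"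
proof -
  let ?a = "cos (2*u)" and ?c = "sin (2*u)" and ?b = "cos (Dg k*u)" and ?d = "sin (Dg k*u)"
  have "gg k u = ((1 + ?a + ?b)^2 + (?c + ?d)^2) / 9"
    unfolding gg_def mm_def iexp_cis cmod_power2 by (simp add: power_divide)
  also have "(1 + ?a + ?b)^2 + (?c + ?d)^2 = 1 + (?a^2 + ?c^2) + (?b^2 + ?d^2) + 2*?a + 2*?b + 2*(?b*?a + ?d*?c)"
    by (simp add: power2_eq_square algebra_simps)
  also have "?b*?a + ?d*?c = cos ((Dg k - 2)*u)"
    using cos_diff[of "Dg k*u" "2*u"] by (simp add: algebra_simps)
  finally show ?thesis by simp
qed

lemma gg_nonneg: "gg k u \<ge> 0" by (simp add: gg_def)

lemma Dg_int: "Dg k = of_int (3 * int k^2 + 1)" by (simp add: Dg_def)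

lemma gg_qmf:
  assumes "k \<ge> 1"
  shows "gg k (u - 2*pi/3) + gg k u + gg k (u + 2*pi/3) = 1"
proof -
  have A: "cos (2*(u - 2*pi/3)) + cos (2*u) + cos (2*(u + 2*pi/3)) = 0"
    using cos3_int[of 2 u] by simp
  have B: "cos (Dg k*(u - 2*pi/3)) + cos (Dg k*u) + cos (Dg k*(u + 2*pi/3)) = 0"
  proof -
    have "\<not> 3 dvd (3 * int k^2 + 1)" by presburger
    from cos3_int[OF this, of u] show ?thesis by (simp add: Dg_int)
  qed
  have C: "cos ((Dg k - 2)*(u - 2*pi/3)) + cos ((Dg k - 2)*u) + cos ((Dg k - 2)*(u + 2*pi/3)) = 0"
  proof -
    have "\<not> 3 dvd (3 * int k^2 - 1)" by presburger
    from cos3_int[OF this, of u] show ?thesis by (simp add: Dg_def)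
  qed
  show ?thesis unfolding gg_formula using A B C by (simp add: field_simps)
qed




definition NN :: "nat \<Rightarrow> real \<Rightarrow> real" where
  "NN n t = (\<Prod>k=1..n. gg k (t / PP k))"

lemma NN_Suc: "NN (Suc n) t = NN n t * gg (Suc n) (t / PP (Suc n))"
  by (simp add: NN_def prod.nat_ivl_Suc')

lemma PP_Suc': "PP (Suc n) = 3 * (real (Suc n) * PP n)"
  by (simp add: PP_Suc)

lemma Q_pos: "real (Suc n) * PP n > 0" using PP_pos[of n] by simp

lemma h1: "(Q::real) > 0 \<Longrightarrow> 3 * (y * Q) / (3 * Q) = y" by simp

lemma h2: "(Q::real) > 0 \<Longrightarrow> (s - 2*pi*(a + c * Q)) / (3 * Q) = (s - 2*pi*a)/(3*Q) - 2*pi*c/3"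
  by (simp add: field_simps)

lemma NN_nonneg: "NN n t \<ge> 0"
  by (simp add: NN_def gg_nonneg prod_nonneg)

lemma PP_dvd: "j \<le> n \<Longrightarrow> \<exists>N::nat. PP n = of_nat N * PP j"
proof (induction n)
  case 0 then show ?case by (intro exI[of _ 1]) simp
next
  case (Suc n)
  show ?case
  proof (cases "j = Suc n")
    case True then show ?thesis by (intro exI[of _ 1]) simp
  next
    case False
    with Suc obtain N where "PP n = of_nat N * PP j" by auto
    then show ?thesis unfolding PP_Suc by (intro exI[of _ "3 * Suc n * N"]) simp
  qed
qed

lemma gg_periodic: "gg k (u + 2 * pi * of_int z) = gg k u"
proof -
  have a: "cos (2 * (u + 2 * pi * of_int z)) = cos (2*u)"
    using cos_shift_int[of "2*u" "2*z"] by (simp add: algebra_simps)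
  have b: "cos (Dg k * (u + 2 * pi * of_int z)) = cos (Dg k * u)"
    using cos_shift_int[of "Dg k*u" "(3 * int k^2 + 1) * z"] by (simp add: Dg_int algebra_simps)
  have c: "cos ((Dg k - 2) * (u + 2 * pi * of_int z)) = cos ((Dg k - 2) * u)"
    using cos_shift_int[of "(Dg k - 2)*u" "(3 * int k^2 - 1) * z"] by (simp add: Dg_def algebra_simps)
  show ?thesis unfolding gg_formula a b c ..
qed

lemma NN_periodic: "NN n (t + 2 * pi * of_int z * PP n) = NN n t"
  unfolding NN_def
proof (rule prod.cong[OF refl])
  fix k assume "k \<in> {1..n}"
  then obtain N where N: "PP n = of_nat N * PP k" using PP_dvd by auto
  have e: "(t + 2 * pi * of_int z * PP n) / PP k = t / PP k + 2 * pi * of_int (z * int N)"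
    using PP_pos[of k] by (simp add: N field_simps)
  show "gg k ((t + 2 * pi * of_int z * PP n) / PP k) = gg k (t / PP k)"
    unfolding e by (rule gg_periodic)
qed

lemma cos_third: 
  fixes n :: int
  assumes "\<not> 3 dvd n"
  shows "cos (2 * pi * of_int n / 3) = -1/2"
proof -
  have "n = 3*(n div 3) + n mod 3" by simp
  moreover have "n mod 3 = 1 \<or> n mod 3 = 2" using assms by presburger
  ultimately obtain q where q: "n = 3*q + 1 \<or> n = 3*q + 2" by metis
  then show ?thesis
  proof
    assume "n = 3*q+1"
    then have "2 * pi * of_int n / 3 = 2*pi/3 + 2 * pi * of_int q" by (simp add: field_simps)
    then show ?thesis by (simp only: cos_shift_int cos_120)
  next
    assume "n = 3*q+2"
    then have e: "2 * pi * of_int n / 3 = 4*pi/3 + 2 * pi * of_int q" by (simp add: field_simps)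
    have c: "cos (4*pi/3) = -1/2"
      using cos_periodic_pi[of "pi/3"] cos_60 by (simp add: field_simps)
    show ?thesis unfolding e cos_shift_int c ..
  qed
qed

lemma gg_zero:
  assumes "\<not> 3 dvd z"
  shows "gg j (2 * pi * of_int z / 3) = 0"
proof -
  have z2: "\<not> 3 dvd (2*z)" using assms by presburger
  have a: "cos (2 * (2 * pi * of_int z / 3)) = -1/2"
    using cos_third[OF z2] by (simp add: algebra_simps)
  have b: "cos (Dg j * (2 * pi * of_int z / 3)) = -1/2"
  proof -
    have e: "Dg j * (2 * pi * of_int z / 3) = 2 * pi * of_int z / 3 + 2 * pi * of_int (int j^2 * z)"
      by (simp add: Dg_def field_simps)
    show ?thesis unfolding e cos_shift_int by (rule cos_third[OF assms])
  qed
  have c: "cos ((Dg j - 2) * (2 * pi * of_int z / 3)) = -1/2"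
  proof -
    have e: "(Dg j - 2) * (2 * pi * of_int z / 3) = 2 * pi * of_int (-z) / 3 + 2 * pi * of_int (int j^2 * z)"
      by (simp add: Dg_def field_simps)
    have "\<not> 3 dvd (-z)" using assms by simp
    then show ?thesis unfolding e cos_shift_int by (rule cos_third)
  qed
  show ?thesis unfolding gg_formula a b c by simp
qed

fun Lam :: "nat \<Rightarrow> real set" where
  "Lam 0 = {0}"
| "Lam (Suc n) = (\<lambda>(l,c). l + of_int c * real (Suc n) * PP n) ` (Lam n \<times> {-1,0,1::int})"

lemma Lam_finite: "finite (Lam n)"
  by (induction n) auto

lemma Lam_Suc_sub: "Lam n \<subseteq> Lam (Suc n)"
proof
  fix l assume "l \<in> Lam n"
  then show "l \<in> Lam (Suc n)" by (auto intro!: image_eqI[of _ _ "(l, 0)"])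
qed

lemma Lam_mono: "m \<le> n \<Longrightarrow> Lam m \<subseteq> Lam n"
  by (induction n) (use Lam_Suc_sub le_Suc_eq in blast)+

lemma Lam_int: "l \<in> Lam n \<Longrightarrow> l \<in> \<int>"
proof (induction n arbitrary: l)
  case 0 then show ?case by simp
next
  case (Suc n)
  then obtain a c where "a \<in> Lam n" "l = a + of_int c * real (Suc n) * PP n" by auto
  moreover have "PP n \<in> \<int>" unfolding PP_def by (simp add: fact_in_Ints)
  ultimately show ?case using Suc.IH by auto
qed

lemma Lam_bound: "l \<in> Lam n \<Longrightarrow> \<bar>l\<bar> \<le> PP n / 2"
proof (induction n arbitrary: l)
  case 0 then show ?case by (simp add: PP_def)
next
  case (Suc n)
  then obtain a c where ac: "a \<in> Lam n" "c \<in> {-1,0,1::int}" "l = a + of_int c * real (Suc n) * PP n" by auto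
  have "\<bar>of_int c * real (Suc n) * PP n\<bar> \<le> real (Suc n) * PP n"
    using ac(2) PP_pos[of n] by (auto simp: abs_mult)
  then have "\<bar>l\<bar> \<le> PP n / 2 + real (Suc n) * PP n" using Suc.IH[OF ac(1)] ac(3) by linarith
  also have "\<dots> \<le> PP (Suc n) / 2" unfolding PP_Suc using PP_pos[of n] by (simp add: field_simps)
  finally show ?case .
qed

lemma Lam_sep:
  "l \<in> Lam n \<Longrightarrow> l' \<in> Lam n \<Longrightarrow> l \<noteq> l' \<Longrightarrow>
     \<exists>j\<in>{1..n}. \<exists>z::int. 3 * (l - l') / PP j = of_int z \<and> \<not> 3 dvd z"
proof (induction n arbitrary: l l')
  case 0 then show ?case by simp
next
  case (Suc n)
  from Suc.prems obtain a c where ac: "a \<in> Lam n" "c \<in> {-1,0,1::int}" "l = a + of_int c * real (Suc n) * PP n" by auto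
  from Suc.prems obtain a' c' where ac': "a' \<in> Lam n" "c' \<in> {-1,0,1::int}" "l' = a' + of_int c' * real (Suc n) * PP n" by auto
  show ?case
  proof (cases "a = a'")
    case True
    then have "c \<noteq> c'" using Suc.prems ac ac' by auto
    have "l - l' = of_int (c - c') * (real (Suc n) * PP n)"
      using ac(3) ac'(3) True by (simp add: algebra_simps)
    then have "3 * (l - l') / PP (Suc n) = of_int (c - c')"
      unfolding PP_Suc' using h1[OF Q_pos] by simp
    moreover have "\<not> 3 dvd (c - c')" using ac(2) ac'(2) \<open>c \<noteq> c'\<close> by auto
    ultimately show ?thesis by (intro bexI[of _ "Suc n"] exI[of _ "c - c'"]) auto
  next
    case False
    then obtain j z where jz: "j \<in> {1..n}" "3 * (a - a') / PP j = of_int z" "\<not> 3 dvd z"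
      using Suc.IH[OF ac(1) ac'(1)] by auto
    obtain N where N: "PP n = of_nat N * PP j" using PP_dvd[of j n] jz(1) by auto
    have "3 * (l - l') / PP j = 3 * (a - a') / PP j + 3 * (of_int (c - c') * real (Suc n) * of_nat N)"
      using ac(3) ac'(3) PP_pos[of j] by (simp add: N field_simps)
    also have "\<dots> = of_int (z + 3 * ((c - c') * int (Suc n) * int N))" using jz(2) by simp
    moreover have "\<not> 3 dvd (z + 3 * ((c - c') * int (Suc n) * int N))"
      using jz(3) by (simp add: dvd_add_left_iff)
    ultimately show ?thesis using jz by (intro bexI[of _ j] exI[of _ "z + 3 * ((c - c') * int (Suc n) * int N)"]) auto
  qed
qed

lemma NN_zero:
  assumes "l \<in> Lam n" "l' \<in> Lam n" "l \<noteq> l'" "m \<ge> n"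
  shows "NN m (2 * pi * (l - l')) = 0"
proof -
  obtain j z where jz: "j \<in> {1..n}" "3 * (l - l') / PP j = of_int z" "\<not> 3 dvd z"
    using Lam_sep[OF assms(1-3)] by auto
  have q: "(l - l') / PP j = of_int z / 3"
    using jz(2) PP_pos[of j] by (simp add: field_simps)
  have eq: "2 * pi * (l - l') / PP j = 2 * pi * of_int z / 3"
  proof -
    have "2 * pi * (l - l') / PP j = 2 * pi * ((l - l') / PP j)" by simp
    also have "\<dots> = 2 * pi * (of_int z / 3)" by (simp only: q)
    finally show ?thesis by simp
  qed
  have "gg j (2 * pi * (l - l') / PP j) = 0" by (subst eq) (rule gg_zero[OF jz(3)])
  moreover have "j \<in> {1..m}" using jz(1) assms(4) by auto
  ultimately show ?thesis unfolding NN_def by (intro prod_zero) auto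
qed

lemma Lam_inj: "inj_on (\<lambda>(l,c). l + of_int c * real (Suc n) * PP n) (Lam n \<times> {-1,0,1::int})"
proof (rule inj_onI, clarify)
  fix a c a' c'
  assume A: "a \<in> Lam n" "c \<in> {-1,0,1::int}" "a' \<in> Lam n" "c' \<in> {-1,0,1::int}"
     and E: "a + of_int c * real (Suc n) * PP n = a' + of_int c' * real (Suc n) * PP n"
  show "a = a' \<and> c = c'"
  proof (cases "a = a'")
    case True then show ?thesis using E PP_pos[of n] by simp
  next
    case False
    then obtain j z where jz: "j \<in> {1..n}" "3 * (a - a') / PP j = of_int z" "\<not> 3 dvd z"
      using Lam_sep[OF A(1) A(3)] by auto
    obtain N where N: "PP n = of_nat N * PP j" using PP_dvd[of j n] jz(1) by auto
    have "3 * (a - a') / PP j = of_int (3 * ((c' - c) * int (Suc n) * int N))"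
      using E PP_pos[of j] by (simp add: N field_simps)
    then have "real_of_int z = real_of_int (3 * ((c' - c) * int (Suc n) * int N))" using jz(2) by simp
    then have "z = 3 * ((c' - c) * int (Suc n) * int N)" by (rule of_int_eq_iff[THEN iffD1])
    then show ?thesis using jz(3) by simp
  qed
qed

lemma hadamard: "(\<Sum>l\<in>Lam n. NN n (s - 2 * pi * l)) = 1"
proof (induction n arbitrary: s)
  case 0 then show ?case by (simp add: NN_def)
next
  case (Suc n)
  have "(\<Sum>l\<in>Lam (Suc n). NN (Suc n) (s - 2 * pi * l))
     = (\<Sum>(a,c)\<in>Lam n \<times> {-1,0,1::int}. NN (Suc n) (s - 2 * pi * (a + of_int c * real (Suc n) * PP n)))"
    by (subst Lam.simps(2), subst sum.reindex[OF Lam_inj]) (simp add: case_prod_beta)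
  also have "\<dots> = (\<Sum>a\<in>Lam n. \<Sum>c\<in>{-1,0,1::int}. NN (Suc n) (s - 2 * pi * (a + of_int c * real (Suc n) * PP n)))"
    by (rule sum.cartesian_product[symmetric])
  also have "\<dots> = (\<Sum>a\<in>Lam n. NN n (s - 2 * pi * a))"
  proof (rule sum.cong[OF refl])
    fix a
    let ?u = "(s - 2 * pi * a) / PP (Suc n)"
    have e: "NN (Suc n) (s - 2 * pi * (a + of_int c * real (Suc n) * PP n)) = NN n (s - 2 * pi * a) * gg (Suc n) (?u - 2 * pi * of_int c / 3)" for c
    proof -
      have "NN n (s - 2 * pi * (a + of_int c * real (Suc n) * PP n)) = NN n (s - 2 * pi * a + 2 * pi * of_int (- c * int (Suc n)) * PP n)"
        by (simp add: algebra_simps)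
      also have "\<dots> = NN n (s - 2 * pi * a)" by (rule NN_periodic)
      finally have 1: "NN n (s - 2 * pi * (a + of_int c * real (Suc n) * PP n)) = NN n (s - 2 * pi * a)" .
      have 2: "(s - 2 * pi * (a + of_int c * real (Suc n) * PP n)) / PP (Suc n) = ?u - 2 * pi * of_int c / 3"
        unfolding PP_Suc' using h2[OF Q_pos, of s a "of_int c"] by (simp add: mult.assoc)
      show ?thesis unfolding NN_Suc 1 2 ..
    qed
    have q: "gg (Suc n) (?u - 2*pi/3) + gg (Suc n) ?u + gg (Suc n) (?u + 2*pi/3) = 1"
      by (rule gg_qmf) simp
    show "(\<Sum>c\<in>{-1,0,1::int}. NN (Suc n) (s - 2 * pi * (a + of_int c * real (Suc n) * PP n))) = NN n (s - 2 * pi * a)"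
    proof -
      have m1: "?u - 2 * pi * of_int (-1::int) / 3 = ?u + 2*pi/3" by simp
      have p1: "?u - 2 * pi * of_int (1::int) / 3 = ?u - 2*pi/3" by simp
      have "(\<Sum>c\<in>{-1,0,1::int}. gg (Suc n) (?u - 2 * pi * of_int c / 3)) = 1"
        using q by (simp add: m1 p1)
      then show ?thesis unfolding e by (simp add: sum_distrib_left[symmetric])
    qed
  qed
  also have "\<dots> = 1" by (rule Suc.IH)
  finally show ?case .
qed




lemma cos_lb: "1 - y^2/2 \<le> cos (y::real)"
proof -
  have "cos y = 1 - 2 * sin (y/2) ^ 2" using cos_double_sin[of "y/2"] by simp
  moreover have "sin (y/2) ^ 2 \<le> (y/2)^2"
    using abs_sin_x_le_abs_x[of "y/2"] by (metis abs_le_square_iff)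
  ultimately show ?thesis by (simp add: power_divide)
qed

lemma gg_sq: "gg k u = ((1 + cos (2*u) + cos (Dg k*u))^2 + (sin (2*u) + sin (Dg k*u))^2) / 9"
  unfolding gg_def mm_def iexp_cis cmod_power2 by (simp add: power_divide)

lemma gg_le1: "gg k u \<le> 1"
proof -
  have "3 + 2*cos(2*u) + 2*cos(Dg k*u) + 2*cos((Dg k - 2)*u) \<le> 9"
    using cos_le_one[of "2*u"] cos_le_one[of "Dg k*u"] cos_le_one[of "(Dg k - 2)*u"] by linarith
  then show ?thesis unfolding gg_formula by simp
qed

lemma gg_lb_small:
  assumes "\<bar>u\<bar> \<le> 1/2"
  shows "gg k u \<ge> 1/36"
proof -
  have "cos (2*u) \<ge> 1 - (2*u)^2/2" by (rule cos_lb)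
  moreover have "u^2 \<le> 1/4"
  proof -
    have "\<bar>u\<bar>^2 \<le> (1/2)^2" using assms by (intro power_mono) auto
    then show ?thesis by (simp add: power2_abs power_divide)
  qed
  ultimately have c: "cos (2*u) \<ge> 1/2" by (simp add: power_mult_distrib)
  have "1/2 \<le> 1 + cos (2*u) + cos (Dg k*u)" using c cos_ge_minus_one[of "Dg k * u"] by linarith
  then have "(1/2)^2 \<le> (1 + cos (2*u) + cos (Dg k*u))^2" by (rule power_mono) simp
  moreover have "gg k u \<ge> (1 + cos (2*u) + cos (Dg k*u))^2 / 9"
    unfolding gg_sq by (intro divide_right_mono) auto
  ultimately show ?thesis by (simp add: power2_eq_square)
qed

lemma gg_lb_big:
  assumes "k \<ge> 1"
  shows "gg k u \<ge> 1 - (Dg k * u)^2 / 4"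
proof -
  have D: "Dg k \<ge> 4" using Dg_ge assms by simp
  have a: "1 - cos (2*u) \<le> (2*u)^2/2" using cos_lb[of "2*u"] by simp
  have b: "1 - cos (Dg k*u) \<le> (Dg k*u)^2/2" using cos_lb[of "Dg k*u"] by simp
  have c: "1 - cos ((Dg k - 2)*u) \<le> ((Dg k - 2)*u)^2/2" using cos_lb[of "(Dg k - 2)*u"] by simp
  have a': "(2*u)^2 \<le> (Dg k * u)^2 / 4"
  proof -
    have "(2*u)^2 = 4 * u^2" by (simp add: power2_eq_square)
    also have "\<dots> \<le> (Dg k^2/4) * u^2"
    proof (rule mult_right_mono)
      have "4*4 \<le> Dg k * Dg k" using D by (intro mult_mono) auto
      then show "4 \<le> Dg k^2/4" by (simp add: power2_eq_square)
    qed simp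
    finally show ?thesis by (simp add: power_mult_distrib)
  qed
  have c': "((Dg k - 2)*u)^2 \<le> (Dg k * u)^2"
  proof -
    have "\<bar>(Dg k - 2)*u\<bar> \<le> \<bar>Dg k * u\<bar>" using D by (simp add: abs_mult mult_right_mono)
    then show ?thesis by (simp add: abs_le_square_iff)
  qed
  have "1 - gg k u = ((1 - cos (2*u)) + (1 - cos (Dg k*u)) + (1 - cos ((Dg k - 2)*u))) * 2 / 9"
    unfolding gg_formula by (simp add: field_simps)
  also have "\<dots> \<le> ((2*u)^2/2 + (Dg k*u)^2/2 + ((Dg k - 2)*u)^2/2) * 2 / 9"
    using a b c by (intro divide_right_mono mult_right_mono add_mono) auto
  also have "\<dots> \<le> (Dg k * u)^2 / 4" using a' c' by simp
  finally show ?thesis by simp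
qed

lemma fact_bound:
  assumes "k \<ge> n + 3" "n \<ge> 1"
  shows "real k ^ 2 * fact n \<le> fact k"
proof -
  define j where "j = k - 3"
  have j: "k = j + 3" using assms unfolding j_def by simp
  have "fact k = real k * real (k - 1) * real (k - 2) * fact j"
    unfolding j by (simp add: fact_Suc algebra_simps numeral_3_eq_3)
  moreover have F: "(fact n :: real) \<le> fact j" using assms j by (intro fact_mono) simp
  moreover have K: "real k ^2 \<le> real k * real (k - 1) * real (k - 2)"
  proof -
    have "k \<ge> 3" using assms by simp
    have "real k \<le> real (k - 1) * real (k - 2)"
    proof -
      have "k \<ge> 4" using assms by simp
      then have "real k \<le> 2 * real (k - 1)" and "2 \<le> real (k - 2)" and "0 \<le> real (k - 1)" by auto
      then have "2 * real (k - 1) \<le> real (k - 2) * real (k - 1)" by (intro mult_right_mono) auto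
      then show ?thesis using \<open>real k \<le> 2 * real (k - 1)\<close> by (simp add: mult.commute)
    qed
    then show ?thesis using \<open>k \<ge> 3\<close> by (simp add: power2_eq_square mult.assoc mult_left_mono)
  qed
  ultimately show ?thesis using mult_mono[OF K F] by simp
qed

lemma PP_split: "n \<le> k \<Longrightarrow> PP k = 3^(k-n) * (3^n * fact k)"
proof -
  assume "n \<le> k"
  then have "(3::real)^k = 3^(k-n) * 3^n" by (simp add: power_add[symmetric])
  then show ?thesis by (simp add: PP_def)
qed

lemma ratio:
  assumes "n \<ge> 1" "k \<ge> n + 3"
  shows "real k^2 * PP n / PP k \<le> (1/3)^(k-n)"
proof -
  have f: "real k^2 * fact n \<le> fact k" by (rule fact_bound) (use assms in auto)
  have "real k^2 * PP n = 3^n * (real k^2 * fact n)" by (simp add: PP_def)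
  also have "\<dots> \<le> 3^n * fact k" using f by simp
  finally have 1: "real k^2 * PP n \<le> 3^n * fact k" .
  have pk: "PP k = 3^(k-n) * (3^n * fact k)" using assms by (intro PP_split) simp
  have "real k^2 * PP n / PP k \<le> (3^n * fact k) / PP k"
    using 1 PP_pos[of k] by (intro divide_right_mono) auto
  also have "\<dots> = (1/3)^(k-n)" unfolding pk by (simp add: power_one_over)
  finally show ?thesis .
qed

lemma Dg_le: "k \<ge> 1 \<Longrightarrow> Dg k \<le> 4 * real k^2"
proof -
  assume "k \<ge> 1"
  then have "1 \<le> real k^2" by (simp add: one_le_power)
  then show ?thesis by (simp add: Dg_def)
qed

lemma a_bound:
  assumes "n \<ge> 1" "k \<ge> n + 3" "\<bar>x\<bar> \<le> (4*pi/3) * PP n"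
  shows "(Dg k * (x / PP k))^2 / 4 \<le> 72 * (1/9)^(k-n)"
proof -
  have k1: "k \<ge> 1" using assms by simp
  have Dpos: "Dg k \<ge> 0" using Dg_ge[OF k1] by simp
  have "\<bar>Dg k * (x / PP k)\<bar> = Dg k * \<bar>x\<bar> / PP k"
    using Dpos PP_pos[of k] by (simp add: abs_mult)
  also have "\<dots> \<le> (4 * real k^2) * ((4*pi/3) * PP n) / PP k"
    using assms(3) Dg_le[OF k1] Dpos PP_pos[of k] by (intro divide_right_mono mult_mono) auto
  also have "\<dots> = (16*pi/3) * (real k^2 * PP n / PP k)" by simp
  also have "\<dots> \<le> (16*pi/3) * (1/3)^(k-n)"
    using ratio[OF assms(1,2)] by (intro mult_left_mono) auto
  finally have b: "\<bar>Dg k * (x / PP k)\<bar> \<le> (16*pi/3) * (1/3)^(k-n)" .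
  have "(Dg k * (x / PP k))^2 \<le> ((16*pi/3) * (1/3)^(k-n))^2"
  proof -
    have "\<bar>Dg k * (x / PP k)\<bar>^2 \<le> ((16*pi/3) * (1/3)^(k-n))^2"
      using b by (intro power_mono) auto
    then show ?thesis by (simp only: power2_abs)
  qed
  also have "\<dots> = (256 * pi^2 / 9) * (1/9)^(k-n)"
  proof -
    have q: "((1/3::real)^(k-n))^2 = (1/9)^(k-n)"
    proof -
      have "((1/3::real)^(k-n))^2 = (1/3)^((k-n)*2)" by (rule power_mult[symmetric])
      also have "\<dots> = (1/3)^(2*(k-n))" by (simp add: mult.commute)
      also have "\<dots> = ((1/3)^2)^(k-n)" by (rule power_mult)
      finally show ?thesis by (simp add: power2_eq_square)
    qed
    show ?thesis unfolding power_mult_distrib q by (simp add: power2_eq_square)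
  qed
  also have "\<dots> \<le> (256 * 10.125 / 9) * (1/9)^(k-n)"
  proof -
    have "pi \<le> 3.15" using pi_approx(2) by simp
    then have "pi^2 \<le> 3.15^2" by (intro power_mono) auto
    then have "pi^2 \<le> 9.9225" by (simp add: power2_eq_square)
    then have "256 * pi^2 / 9 \<le> 256 * 10.125 / 9" by simp
    then show ?thesis by (intro mult_right_mono) auto
  qed
  finally show ?thesis by simp
qed

lemma geo_aux: "(\<Sum>k\<in>{n+3..n+2+d}. (1/9::real)^(k-n)) \<le> 1/648 - (1/8) * (1/9)^(d+2)"
proof (induction d)
  case 0 then show ?case by simp
next
  case (Suc d)
  have "{n+3..n+2+Suc d} = insert (n+2+Suc d) {n+3..n+2+d}" by auto
  then have "(\<Sum>k\<in>{n+3..n+2+Suc d}. (1/9::real)^(k-n)) = (1/9)^(d+3) + (\<Sum>k\<in>{n+3..n+2+d}. (1/9::real)^(k-n))"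
    by (simp add: ac_simps)
  also have "\<dots> \<le> (1/9)^(d+3) + (1/648 - (1/8) * (1/9)^(d+2))" using Suc by simp
  also have "\<dots> = 1/648 - (1/8) * (1/9)^(Suc d+2)"
  proof -
    have e1: "d+3 = Suc (d+2)" "Suc d + 2 = Suc (d+2)" by simp_all
    have "(1/9::real)^(d+3) = (1/9)^(d+2) * (1/9)" by (simp only: e1 power_Suc2)
    moreover have "(1/9::real)^(Suc d+2) = (1/9)^(d+2) * (1/9)" by (simp only: e1 power_Suc2)
    ultimately show ?thesis by linarith
  qed
  finally show ?case .
qed

lemma geo: "m \<ge> n + 2 \<Longrightarrow> (\<Sum>k\<in>{n+3..m}. (1/9::real)^(k-n)) \<le> 1/648"
proof -
  assume "m \<ge> n + 2"
  then obtain d where "m = n + 2 + d" using le_Suc_ex by blast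
  then have e: "(\<Sum>k\<in>{n+3..m}. (1/9::real)^(k-n)) = (\<Sum>k\<in>{n+3..n+2+d}. (1/9::real)^(k-n))" by simp
  have "0 \<le> (1/8::real) * (1/9)^(d+2)" by simp
  then show ?thesis using geo_aux[of n d] unfolding e by linarith
qed

lemma NN_split: "j \<le> m \<Longrightarrow> NN m x = NN j x * (\<Prod>k\<in>{Suc j..m}. gg k (x / PP k))"
proof (induction m)
  case 0 then show ?case by simp
next
  case (Suc m)
  show ?case
  proof (cases "j = Suc m")
    case True then show ?thesis by simp
  next
    case False
    then have "j \<le> m" using Suc.prems by simp
    then show ?thesis using Suc.IH by (simp add: NN_Suc prod.nat_ivl_Suc' mult.assoc)
  qed
qed

definition delta0 :: real where "delta0 = 1/1458"

lemma tail_lb: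
  assumes "n \<ge> 3" "\<bar>x\<bar> \<le> (4*pi/3) * PP n" "m \<ge> n + 2"
  shows "NN m x \<ge> delta0 * NN n x"
proof -
  have u1: "\<bar>x / PP (Suc n)\<bar> \<le> 1/2"
  proof -
    have "\<bar>x / PP (Suc n)\<bar> = \<bar>x\<bar> / PP (Suc n)" using PP_pos[of "Suc n"] by (simp add: abs_divide)
    also have "\<dots> \<le> ((4*pi/3) * PP n) / PP (Suc n)"
      using assms(2) PP_pos[of "Suc n"] by (intro divide_right_mono) auto
    also have "\<dots> = (4*pi/3) / (3 * real (Suc n))" unfolding PP_Suc' using PP_pos[of n] by simp
    also have "\<dots> \<le> (4*pi/3) / 12" using assms(1) by (intro divide_left_mono) auto
    also have "\<dots> \<le> 1/2" using pi_approx(2) by simp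
    finally show ?thesis .
  qed
  have u2: "\<bar>x / PP (Suc (Suc n))\<bar> \<le> 1/2"
  proof -
    have "PP (Suc n) \<le> PP (Suc (Suc n))" unfolding PP_Suc[of "Suc n"] using PP_pos[of "Suc n"] by simp
    then have "\<bar>x / PP (Suc (Suc n))\<bar> \<le> \<bar>x / PP (Suc n)\<bar>"
      using PP_pos[of "Suc n"] by (simp add: divide_left_mono)
    then show ?thesis using u1 by linarith
  qed
  have g1: "gg (Suc n) (x / PP (Suc n)) \<ge> 1/36" by (rule gg_lb_small[OF u1])
  have g2: "gg (Suc (Suc n)) (x / PP (Suc (Suc n))) \<ge> 1/36" by (rule gg_lb_small[OF u2])
  have NN2: "NN (n+2) x = NN n x * gg (Suc n) (x / PP (Suc n)) * gg (Suc (Suc n)) (x / PP (Suc (Suc n)))"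
    by (simp add: NN_Suc)
  have NN2b: "NN (n+2) x \<ge> NN n x * (1/36) * (1/36)"
    unfolding NN2 using g1 g2 NN_nonneg[of n x] by (intro mult_mono) auto
  define a where "a k = (Dg k * (x / PP k))^2 / 4" for k
  have ab: "a k \<le> 72 * (1/9)^(k-n)" if "k \<in> {n+3..m}" for k
    unfolding a_def by (rule a_bound) (use assms that in auto)
  have a01: "a k \<in> {0..1}" if "k \<in> {n+3..m}" for k
  proof -
    have "(1/9::real)^(k-n) \<le> (1/9)^3" using that by (intro power_decreasing) auto
    then have "a k \<le> 72 * (1/9)^3" using ab[OF that] by linarith
    moreover have "72 * (1/9::real)^3 \<le> 1" by (simp add: power3_eq_cube)
    moreover have "a k \<ge> 0" by (simp add: a_def)
    ultimately show ?thesis by simp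
  qed
  have "(\<Prod>k\<in>{n+3..m}. gg k (x / PP k)) \<ge> (\<Prod>k\<in>{n+3..m}. 1 - a k)"
  proof (rule prod_mono)
    fix k assume k: "k \<in> {n+3..m}"
    show "0 \<le> 1 - a k \<and> 1 - a k \<le> gg k (x / PP k)"
      using a01[OF k] gg_lb_big[of k "x / PP k"] k unfolding a_def by auto
  qed
  moreover have "(\<Prod>k\<in>{n+3..m}. 1 - a k) \<ge> 1 - (\<Sum>k\<in>{n+3..m}. a k)"
    by (rule Weierstrass_prod_ineq) (use a01 in auto)
  moreover have "(\<Sum>k\<in>{n+3..m}. a k) \<le> 1/9"
  proof -
    have "(\<Sum>k\<in>{n+3..m}. a k) \<le> (\<Sum>k\<in>{n+3..m}. 72 * (1/9::real)^(k-n))"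
      by (rule sum_mono) (rule ab)
    also have "\<dots> = 72 * (\<Sum>k\<in>{n+3..m}. (1/9::real)^(k-n))" by (simp add: sum_distrib_left)
    also have "\<dots> \<le> 72 * (1/648)" using geo[OF assms(3)] by simp
    finally show ?thesis by simp
  qed
  ultimately have P: "(\<Prod>k\<in>{n+3..m}. gg k (x / PP k)) \<ge> 8/9" by linarith
  have "NN m x = NN (n+2) x * (\<Prod>k\<in>{n+3..m}. gg k (x / PP k))"
    using NN_split[of "n+2" m x] assms(3) by (simp add: numeral_3_eq_3)
  also have "\<dots> \<ge> (NN n x * (1/36) * (1/36)) * (8/9)"
    using NN2b P NN_nonneg[of n x] by (intro mult_mono) auto
  finally show ?thesis unfolding delta0_def by simp
qed




lemma Q_lemma:
  fixes A :: "nat \<Rightarrow> real \<Rightarrow> real" and B :: "real \<Rightarrow> real" and L :: "nat \<Rightarrow> real set"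
    and Nb :: nat and \<delta> :: real
  assumes fin: "\<And>n. finite (L n)"
    and mono: "\<And>m n. m \<le> n \<Longrightarrow> L m \<subseteq> L n"
    and sum1: "\<And>n. (\<Sum>l\<in>L n. A n l) = 1"
    and conv: "\<And>l. (\<lambda>n. A n l) \<longlonglongrightarrow> B l"
    and Bnn: "\<And>l. 0 \<le> B l"
    and BleA: "\<And>n l. B l \<le> A n l"
    and lb: "\<And>n l. n \<ge> Nb \<Longrightarrow> l \<in> L n \<Longrightarrow> \<delta> * A n l \<le> B l"
    and dpos: "\<delta> > 0"
  shows "(\<lambda>n. \<Sum>l\<in>L n. B l) \<longlonglongrightarrow> 1"
proof -
  define s where "s n = (\<Sum>l\<in>L n. B l)" for n
  have s_le: "s n \<le> 1" for n
  proof -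
    have "s n \<le> (\<Sum>l\<in>L n. A n l)" unfolding s_def by (rule sum_mono) (rule BleA)
    then show ?thesis using sum1 by simp
  qed
  have s_inc: "incseq s"
  proof (rule incseq_SucI)
    fix n show "s n \<le> s (Suc n)" unfolding s_def
      by (rule sum_mono2) (use fin mono Bnn in auto)
  qed
  obtain S where S: "s \<longlonglongrightarrow> S"
    using incseq_convergent[OF s_inc, of 1] s_le by blast
  have sS: "s n \<le> S" for n using incseq_le[OF s_inc S] by simp
  have main: "\<exists>N. \<forall>n\<ge>N. 1 - s n < e" if e: "e > 0" for e
  proof -
    have ed: "e * \<delta> / 2 > 0" using e dpos by simp
    obtain N0 where N0: "\<forall>n\<ge>N0. norm (s n - S) < e * \<delta> / 2"
      using LIMSEQ_D[OF S ed] by blast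
    then have N0': "S - s N0 < e * \<delta> / 2" using sS[of N0] by auto
    have c: "(\<lambda>n. \<Sum>l\<in>L N0. A n l - B l) \<longlonglongrightarrow> (\<Sum>l\<in>L N0. B l - B l)"
      by (intro tendsto_sum tendsto_diff conv tendsto_const)
    then have c0: "(\<lambda>n. \<Sum>l\<in>L N0. A n l - B l) \<longlonglongrightarrow> 0" by simp
    have e2: "e / 2 > 0" using e by simp
    obtain N2 where N2: "\<forall>n\<ge>N2. norm ((\<Sum>l\<in>L N0. A n l - B l) - 0) < e / 2"
      using LIMSEQ_D[OF c0 e2] by blast
    show ?thesis
    proof (intro exI[of _ "max N0 (max Nb N2)"] allI impI)
      fix n assume n: "n \<ge> max N0 (max Nb N2)"
      have sub: "L N0 \<subseteq> L n" using mono n by simp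
      have "1 - s n = (\<Sum>l\<in>L n. A n l - B l)" unfolding s_def using sum1[of n] by (simp add: sum_subtractf)
      also have "\<dots> = (\<Sum>l\<in>L N0. A n l - B l) + (\<Sum>l\<in>L n - L N0. A n l - B l)"
        using sum.subset_diff[OF sub fin, of "\<lambda>l. A n l - B l"] by simp
      also have "(\<Sum>l\<in>L n - L N0. A n l - B l) \<le> (\<Sum>l\<in>L n - L N0. B l / \<delta>)"
      proof (rule sum_mono)
        fix l assume l: "l \<in> L n - L N0"
        have "\<delta> * A n l \<le> B l" using lb[of n l] n l by auto
        then have "A n l \<le> B l / \<delta>" using dpos by (simp add: field_simps)
        then show "A n l - B l \<le> B l / \<delta>" using Bnn[of l] by linarith
      qed
      also have "(\<Sum>l\<in>L n - L N0. B l / \<delta>) = (s n - s N0) / \<delta>"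
        unfolding s_def using sum.subset_diff[OF sub fin, of B] by (simp add: sum_divide_distrib)
      also have "\<dots> \<le> (S - s N0) / \<delta>" using sS[of n] dpos by (simp add: divide_right_mono)
      also have "\<dots> < e / 2" using N0' dpos by (simp add: field_simps)
      finally have 1: "1 - s n < (\<Sum>l\<in>L N0. A n l - B l) + e / 2" by simp
      have "(\<Sum>l\<in>L N0. A n l - B l) < e / 2" using N2 n by auto
      with 1 show "1 - s n < e" by simp
    qed
  qed
  show ?thesis
    unfolding s_def[symmetric]
  proof (rule LIMSEQ_I)
    fix e :: real assume "e > 0"
    then obtain N where "\<forall>n\<ge>N. 1 - s n < e" using main by blast
    then show "\<exists>N. \<forall>n\<ge>N. norm (s n - 1) < e" using s_le by (auto intro!: exI[of _ N])
  qed
qed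




lemma NN_decseq: "decseq (\<lambda>n. NN n t)"
proof (rule decseq_SucI)
  fix n
  show "NN (Suc n) t \<le> NN n t" unfolding NN_Suc
    using NN_nonneg[of n t] gg_le1[of "Suc n" "t / PP (Suc n)"] by (simp add: mult_left_le)
qed

locale moran_mu = moran +
  fixes \<mu> :: "real measure"
  assumes cm: "is_cantor_moran_measure p D \<mu>"
begin

lemma rd: "real_distribution \<mu>"
  using cm unfolding is_cantor_moran_measure_def real_distribution_def real_distribution_axioms_def by auto

lemma sets_mu[measurable_cong]: "sets \<mu> = sets borel"
  using cm unfolding is_cantor_moran_measure_def by auto

lemma space_mu: "space \<mu> = UNIV"
  using sets_eq_imp_space_eq[OF sets_mu] by simp

lemma char_lim: "(\<lambda>n. char (moran_conv p D n) t) \<longlonglongrightarrow> char \<mu> t"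
proof (rule levy_continuity1)
  show "\<And>n. real_distribution (moran_conv p D n)" using moran_conv_char by blast
  show "real_distribution \<mu>" by (rule rd)
  show "weak_conv_m (moran_conv p D) \<mu>" using cm unfolding is_cantor_moran_measure_def by auto
qed

lemma NN_char: "NN n t = (cmod (char (moran_conv p D n) t))^2"
proof -
  have "char (moran_conv p D n) t = (\<Prod>k=1..n. mm k (t / PP k))" using moran_conv_char by blast
  then have "cmod (char (moran_conv p D n) t) = (\<Prod>k=1..n. cmod (mm k (t / PP k)))"
    by (simp add: prod_norm)
  then show ?thesis unfolding NN_def gg_def by (simp add: prod_power_distrib)
qed

definition Bc :: "real \<Rightarrow> real" where "Bc t = (cmod (char \<mu> t))^2"

lemma NN_lim: "(\<lambda>n. NN n t) \<longlonglongrightarrow> Bc t"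
  unfolding NN_char Bc_def by (intro tendsto_intros char_lim)

lemma Bc_le: "Bc t \<le> NN n t"
  by (rule decseq_ge[OF NN_decseq NN_lim])

lemma Bc_nonneg: "Bc t \<ge> 0" by (simp add: Bc_def)

definition LL :: "real set" where "LL = (\<Union>n. Lam n)"

lemma LL_countable: "countable LL"
proof -
  have "LL \<subseteq> \<int>" unfolding LL_def using Lam_int by blast
  moreover have "countable (\<int> :: real set)" by (simp add: Ints_def)
  ultimately show ?thesis by (rule countable_subset)
qed

lemma char_orth:
  assumes "l \<in> LL" "l' \<in> LL" "l \<noteq> l'"
  shows "char \<mu> (2 * pi * (l - l')) = 0"
proof -
  obtain a b where "l \<in> Lam a" "l' \<in> Lam b" using assms unfolding LL_def by auto
  then have l: "l \<in> Lam (max a b)" "l' \<in> Lam (max a b)" using Lam_mono[of a "max a b"] Lam_mono[of b "max a b"] by auto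
  have "eventually (\<lambda>m. NN m (2 * pi * (l - l')) = 0) sequentially"
    using NN_zero[OF l assms(3)] by (auto simp: eventually_sequentially intro!: exI[of _ "max a b"])
  then have "(\<lambda>m. NN m (2 * pi * (l - l'))) \<longlonglongrightarrow> 0"
    by (rule tendsto_eventually)
  then have "Bc (2 * pi * (l - l')) = 0" using NN_lim LIMSEQ_unique by blast
  then show ?thesis by (simp add: Bc_def)
qed

lemma PP_ge: "PP n \<ge> real n"
proof -
  have "real n \<le> fact n" by (induction n) (auto simp: fact_Suc)
  also have "\<dots> \<le> 3^n * fact n" by (simp add: one_le_power)
  finally show ?thesis by (simp add: PP_def)
qed

lemma tail_mu:
  "\<exists>N1. \<forall>n\<ge>N1. \<forall>l\<in>Lam n. delta0 * NN n (s - 2 * pi * l) \<le> Bc (s - 2 * pi * l)"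
proof (intro exI[of _ "max 3 (nat \<lceil>3 * \<bar>s\<bar> / pi\<rceil>)"] allI impI ballI)
  fix n l assume n: "n \<ge> max 3 (nat \<lceil>3 * \<bar>s\<bar> / pi\<rceil>)" and l: "l \<in> Lam n"
  have "3 * \<bar>s\<bar> / pi \<le> real n" using n by linarith
  then have "3 * \<bar>s\<bar> / pi \<le> PP n" using PP_ge[of n] by linarith
  then have s: "\<bar>s\<bar> \<le> (pi/3) * PP n" by (simp add: field_simps)
  have "\<bar>s - 2 * pi * l\<bar> \<le> \<bar>s\<bar> + 2 * pi * \<bar>l\<bar>" using abs_triangle_ineq4[of s "2*pi*l"] by (simp add: abs_mult)
  also have "\<dots> \<le> (pi/3) * PP n + 2 * pi * (PP n / 2)"
    using s Lam_bound[OF l] by (intro add_mono mult_left_mono) auto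
  finally have x: "\<bar>s - 2 * pi * l\<bar> \<le> (4*pi/3) * PP n" by (simp add: field_simps)
  have "eventually (\<lambda>m. delta0 * NN n (s - 2 * pi * l) \<le> NN m (s - 2 * pi * l)) sequentially"
    using tail_lb[OF _ x] n by (auto simp: eventually_sequentially intro!: exI[of _ "n+2"])
  then show "delta0 * NN n (s - 2 * pi * l) \<le> Bc (s - 2 * pi * l)"
    by (intro tendsto_lowerbound[OF NN_lim]) auto
qed

lemma Q_one: "(\<lambda>n. \<Sum>l\<in>Lam n. Bc (s - 2 * pi * l)) \<longlonglongrightarrow> 1"
proof -
  obtain N1 where N1: "\<forall>n\<ge>N1. \<forall>l\<in>Lam n. delta0 * NN n (s - 2 * pi * l) \<le> Bc (s - 2 * pi * l)"
    using tail_mu by blast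
  show ?thesis
    by (rule Q_lemma[where A="\<lambda>n l. NN n (s - 2 * pi * l)" and Nb=N1 and \<delta>=delta0])
       (use Lam_finite Lam_mono hadamard NN_lim Bc_nonneg Bc_le N1 in \<open>auto simp: delta0_def\<close>)
qed

end




lemma exp_fun_cis: "exp_fun l x = cis (2 * pi * (l * x))"
  unfolding exp_fun_def cis_conv_exp by (simp add: algebra_simps)

lemma exp_fun_mult_cnj: "exp_fun a x * cnj (exp_fun b x) = iexp (2 * pi * (a - b) * x)"
proof -
  have "exp_fun a x * cnj (exp_fun b x) = cis (2 * pi * (a * x)) * cis (- (2 * pi * (b * x)))"
    unfolding exp_fun_cis by (simp add: cis_cnj)
  also have "\<dots> = cis (2 * pi * (a * x) + - (2 * pi * (b * x)))" by (rule cis_mult)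
  also have "2 * pi * (a * x) + - (2 * pi * (b * x)) = 2 * pi * (a - b) * x" by (simp add: algebra_simps)
  finally show ?thesis unfolding iexp_cis .
qed

lemma norm_exp_fun[simp]: "cmod (exp_fun l x) = 1"
  unfolding exp_fun_cis by simp

lemma exp_fun_measurable[measurable]: "exp_fun l \<in> borel_measurable borel"
  unfolding exp_fun_def by measurable

context moran_mu
begin

lemma exp_fun_meas_mu[measurable]: "exp_fun l \<in> borel_measurable \<mu>"
  using exp_fun_measurable measurable_cong_sets[OF sets_mu refl] by simp

lemma integrable_iexp_mu[simp]: "integrable \<mu> (\<lambda>x. iexp (t * x))"
proof -
  interpret real_distribution \<mu> by (rule rd)
  show ?thesis by (rule integrable_iexp) auto
qed

lemma char_mu_0: "char \<mu> 0 = 1"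
proof -
  interpret real_distribution \<mu> by (rule rd)
  show ?thesis by (rule char_zero)
qed

lemma char_mu_neg: "char \<mu> (- t) = cnj (char \<mu> t)"
proof -
  have "char \<mu> (- t) = (\<integral>x. cnj (iexp (t * x)) \<partial>\<mu>)"
    unfolding char_def iexp_cis by (simp add: cis_cnj)
  then show ?thesis unfolding char_def by simp
qed

lemma ip_exp: "(\<integral>x. exp_fun a x * cnj (exp_fun b x) \<partial>\<mu>) = char \<mu> (2 * pi * (a - b))"
  unfolding exp_fun_mult_cnj char_def by simp

lemma orth_part:
  "\<forall>l\<in>LL. \<forall>l'\<in>LL. l \<noteq> l' \<longrightarrow> (\<integral>x. exp_fun l x * cnj (exp_fun l' x) \<partial>\<mu>) = 0"
  using ip_exp char_orth by simp

lemma expand4: "((A::complex) - S) * (B - T) = A*B - A*T - S*B + S*T"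
  by (simp add: algebra_simps)

lemma norm_h:
  fixes L :: "real set" and \<xi> :: real
  assumes L: "finite L" "L \<subseteq> LL"
  shows "(\<integral>x. (cmod (exp_fun \<xi> x - (\<Sum>l\<in>L. char \<mu> (2*pi*(\<xi> - l)) * exp_fun l x)))^2 \<partial>\<mu>)
           = 1 - (\<Sum>l\<in>L. (cmod (char \<mu> (2*pi*(\<xi> - l))))^2)"
proof -
  define c where "c l = char \<mu> (2*pi*(\<xi> - l))" for l
  define h where "h x = exp_fun \<xi> x - (\<Sum>l\<in>L. c l * exp_fun l x)" for x
  have cc: "cnj (c l) = char \<mu> (2*pi*(l - \<xi>))" for l
    unfolding c_def char_mu_neg[symmetric] by (simp add: algebra_simps)
  have pt: "complex_of_real ((cmod (h x))^2) = 1 - (\<Sum>l\<in>L. cnj (c l) * iexp (2*pi*(\<xi> - l)*x))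
      - (\<Sum>l\<in>L. c l * iexp (2*pi*(l - \<xi>)*x))
      + (\<Sum>l\<in>L. \<Sum>l'\<in>L. (c l * cnj (c l')) * iexp (2*pi*(l - l')*x))" for x
  proof -
    have "complex_of_real ((cmod (h x))^2) = h x * cnj (h x)" by (rule complex_norm_square)
    also have "cnj (h x) = cnj (exp_fun \<xi> x) - (\<Sum>l\<in>L. cnj (c l) * cnj (exp_fun l x))"
      by (simp add: h_def)
    also have "h x * \<dots> = exp_fun \<xi> x * cnj (exp_fun \<xi> x)
        - exp_fun \<xi> x * (\<Sum>l\<in>L. cnj (c l) * cnj (exp_fun l x))
        - (\<Sum>l\<in>L. c l * exp_fun l x) * cnj (exp_fun \<xi> x)
        + (\<Sum>l\<in>L. c l * exp_fun l x) * (\<Sum>l\<in>L. cnj (c l) * cnj (exp_fun l x))"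
      unfolding h_def by (rule expand4)
    also have "exp_fun \<xi> x * cnj (exp_fun \<xi> x) = 1"
      unfolding exp_fun_mult_cnj by simp
    also have "exp_fun \<xi> x * (\<Sum>l\<in>L. cnj (c l) * cnj (exp_fun l x)) = (\<Sum>l\<in>L. cnj (c l) * iexp (2*pi*(\<xi> - l)*x))"
      unfolding sum_distrib_left
    proof (rule sum.cong[OF refl])
      fix l
      have "exp_fun \<xi> x * (cnj (c l) * cnj (exp_fun l x)) = cnj (c l) * (exp_fun \<xi> x * cnj (exp_fun l x))"
        by (rule mult.left_commute)
      then show "exp_fun \<xi> x * (cnj (c l) * cnj (exp_fun l x)) = cnj (c l) * iexp (2*pi*(\<xi> - l)*x)"
        by (simp only: exp_fun_mult_cnj)
    qed
    also have "(\<Sum>l\<in>L. c l * exp_fun l x) * cnj (exp_fun \<xi> x) = (\<Sum>l\<in>L. c l * iexp (2*pi*(l - \<xi>)*x))"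
      unfolding sum_distrib_right
    proof (rule sum.cong[OF refl])
      fix l
      have "c l * exp_fun l x * cnj (exp_fun \<xi> x) = c l * (exp_fun l x * cnj (exp_fun \<xi> x))"
        by (rule mult.assoc)
      then show "c l * exp_fun l x * cnj (exp_fun \<xi> x) = c l * iexp (2*pi*(l - \<xi>)*x)"
        by (simp only: exp_fun_mult_cnj)
    qed
    also have "(\<Sum>l\<in>L. c l * exp_fun l x) * (\<Sum>l\<in>L. cnj (c l) * cnj (exp_fun l x))
        = (\<Sum>l\<in>L. \<Sum>l'\<in>L. (c l * cnj (c l')) * iexp (2*pi*(l - l')*x))"
      unfolding sum_product
    proof (intro sum.cong refl)
      fix l l'
      have "c l * exp_fun l x * (cnj (c l') * cnj (exp_fun l' x)) = (c l * cnj (c l')) * (exp_fun l x * cnj (exp_fun l' x))"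
        by (simp only: ac_simps)
      then show "c l * exp_fun l x * (cnj (c l') * cnj (exp_fun l' x)) = (c l * cnj (c l')) * iexp (2*pi*(l - l')*x)"
        by (simp only: exp_fun_mult_cnj)
    qed
    finally show ?thesis .
  qed
  have int_iexp: "integrable \<mu> (\<lambda>x. a * iexp (t * x))" for a t
    by (intro integrable_mult_right integrable_iexp_mu)
  have "complex_of_real (\<integral>x. (cmod (h x))^2 \<partial>\<mu>) = (\<integral>x. complex_of_real ((cmod (h x))^2) \<partial>\<mu>)"
    by (rule integral_complex_of_real[symmetric])
  also have "\<dots> = (\<integral>x. 1 - (\<Sum>l\<in>L. cnj (c l) * iexp (2*pi*(\<xi> - l)*x))
      - (\<Sum>l\<in>L. c l * iexp (2*pi*(l - \<xi>)*x))
      + (\<Sum>l\<in>L. \<Sum>l'\<in>L. (c l * cnj (c l')) * iexp (2*pi*(l - l')*x)) \<partial>\<mu>)"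
    unfolding pt ..
  also have "\<dots> = 1 - (\<Sum>l\<in>L. cnj (c l) * c l) - (\<Sum>l\<in>L. c l * cnj (c l))
      + (\<Sum>l\<in>L. \<Sum>l'\<in>L. (c l * cnj (c l')) * char \<mu> (2*pi*(l - l')))"
  proof -
    interpret real_distribution \<mu> by (rule rd)
    have i1: "integrable \<mu> (\<lambda>x. \<Sum>l\<in>L. cnj (c l) * iexp (2*pi*(\<xi> - l)*x))" by (intro Bochner_Integration.integrable_sum int_iexp)
    have i2: "integrable \<mu> (\<lambda>x. \<Sum>l\<in>L. c l * iexp (2*pi*(l - \<xi>)*x))" by (intro Bochner_Integration.integrable_sum int_iexp)
    have i3: "integrable \<mu> (\<lambda>x. \<Sum>l\<in>L. \<Sum>l'\<in>L. (c l * cnj (c l')) * iexp (2*pi*(l - l')*x))"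
      by (intro Bochner_Integration.integrable_sum int_iexp)
    have e1: "(\<integral>x. (\<Sum>l\<in>L. cnj (c l) * iexp (2*pi*(\<xi> - l)*x)) \<partial>\<mu>) = (\<Sum>l\<in>L. cnj (c l) * c l)"
    proof -
      have "(\<integral>x. (\<Sum>l\<in>L. cnj (c l) * iexp (2*pi*(\<xi> - l)*x)) \<partial>\<mu>) = (\<Sum>l\<in>L. \<integral>x. cnj (c l) * iexp (2*pi*(\<xi> - l)*x) \<partial>\<mu>)"
        by (rule Bochner_Integration.integral_sum) (rule int_iexp)
      also have "\<dots> = (\<Sum>l\<in>L. cnj (c l) * c l)" by (simp add: c_def char_def)
      finally show ?thesis .
    qed
    have e2: "(\<integral>x. (\<Sum>l\<in>L. c l * iexp (2*pi*(l - \<xi>)*x)) \<partial>\<mu>) = (\<Sum>l\<in>L. c l * cnj (c l))"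
    proof -
      have "(\<integral>x. (\<Sum>l\<in>L. c l * iexp (2*pi*(l - \<xi>)*x)) \<partial>\<mu>) = (\<Sum>l\<in>L. \<integral>x. c l * iexp (2*pi*(l - \<xi>)*x) \<partial>\<mu>)"
        by (rule Bochner_Integration.integral_sum) (rule int_iexp)
      also have "\<dots> = (\<Sum>l\<in>L. c l * cnj (c l))" unfolding cc by (simp add: char_def)
      finally show ?thesis .
    qed
    have e3: "(\<integral>x. (\<Sum>l\<in>L. \<Sum>l'\<in>L. (c l * cnj (c l')) * iexp (2*pi*(l - l')*x)) \<partial>\<mu>)
        = (\<Sum>l\<in>L. \<Sum>l'\<in>L. (c l * cnj (c l')) * char \<mu> (2*pi*(l - l')))"
    proof -
      have "(\<integral>x. (\<Sum>l\<in>L. \<Sum>l'\<in>L. (c l * cnj (c l')) * iexp (2*pi*(l - l')*x)) \<partial>\<mu>)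
          = (\<Sum>l\<in>L. \<integral>x. (\<Sum>l'\<in>L. (c l * cnj (c l')) * iexp (2*pi*(l - l')*x)) \<partial>\<mu>)"
        by (rule Bochner_Integration.integral_sum) (intro Bochner_Integration.integrable_sum int_iexp)
      also have "\<dots> = (\<Sum>l\<in>L. \<Sum>l'\<in>L. \<integral>x. (c l * cnj (c l')) * iexp (2*pi*(l - l')*x) \<partial>\<mu>)"
        by (intro sum.cong refl Bochner_Integration.integral_sum int_iexp)
      also have "\<dots> = (\<Sum>l\<in>L. \<Sum>l'\<in>L. (c l * cnj (c l')) * char \<mu> (2*pi*(l - l')))"
        by (simp add: char_def)
      finally show ?thesis .
    qed
    have e0: "(\<integral>x. (1::complex) \<partial>\<mu>) = 1" using prob_space space_mu by simp
    show ?thesis using i1 i2 i3 e0 e1 e2 e3 by simp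
  qed
  also have "(\<Sum>l\<in>L. \<Sum>l'\<in>L. (c l * cnj (c l')) * char \<mu> (2*pi*(l - l'))) = (\<Sum>l\<in>L. c l * cnj (c l))"
  proof (rule sum.cong[OF refl])
    fix l assume l: "l \<in> L"
    have "(\<Sum>l'\<in>L. (c l * cnj (c l')) * char \<mu> (2*pi*(l - l'))) = (\<Sum>l'\<in>L. if l' = l then c l * cnj (c l) else 0)"
    proof (rule sum.cong[OF refl])
      fix l' assume l': "l' \<in> L"
      show "(c l * cnj (c l')) * char \<mu> (2*pi*(l - l')) = (if l' = l then c l * cnj (c l) else 0)"
        using char_orth[of l l'] l l' L(2) char_mu_0 by auto
    qed
    also have "\<dots> = c l * cnj (c l)" using L(1) l by simp
    finally show "(\<Sum>l'\<in>L. (c l * cnj (c l')) * char \<mu> (2*pi*(l - l'))) = c l * cnj (c l)" .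
  qed
  also have "1 - (\<Sum>l\<in>L. cnj (c l) * c l) - (\<Sum>l\<in>L. c l * cnj (c l)) + (\<Sum>l\<in>L. c l * cnj (c l))
      = complex_of_real (1 - (\<Sum>l\<in>L. (cmod (c l))^2))"
  proof -
    have "complex_of_real (\<Sum>l\<in>L. (cmod (c l))^2) = (\<Sum>l\<in>L. c l * cnj (c l))"
      by (simp only: of_real_sum complex_norm_square)
    moreover have "(\<Sum>l\<in>L. cnj (c l) * c l) = (\<Sum>l\<in>L. c l * cnj (c l))" by (simp add: mult.commute)
    ultimately show ?thesis by simp
  qed
  finally have "complex_of_real (\<integral>x. (cmod (h x))^2 \<partial>\<mu>) = complex_of_real (1 - (\<Sum>l\<in>L. (cmod (c l))^2))" .
  then show ?thesis unfolding h_def c_def by (simp only: of_real_eq_iff)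
qed

end




lemma cnj_measurable[measurable]:
  "g \<in> borel_measurable M \<Longrightarrow> (\<lambda>x. cnj (g x :: complex)) \<in> borel_measurable M"
  by (rule borel_measurable_continuous_on[where f=cnj]) (auto intro: continuous_intros)

lemma cnj_exp_fun: "cnj (exp_fun l x) = exp_fun (-l) x"
  unfolding exp_fun_cis by (simp add: cis_cnj)

lemma cnj_exp_fun_meas[measurable]: "(\<lambda>x. cnj (exp_fun l x)) \<in> borel_measurable borel"
  unfolding cnj_exp_fun by measurable

context moran_mu
begin

lemma L2_integrable:
  assumes fm: "f \<in> borel_measurable \<mu>" and f2: "integrable \<mu> (\<lambda>x. (cmod (f x))^2)"
  shows "integrable \<mu> f"
proof -
  interpret real_distribution \<mu> by (rule rd)
  have i: "integrable \<mu> (\<lambda>x. 1 + (cmod (f x))^2)" using f2 by simp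
  show ?thesis
  proof (rule Bochner_Integration.integrable_bound[OF i fm])
    show "AE x in \<mu>. norm (f x) \<le> norm (1 + (cmod (f x))^2)"
    proof (rule AE_I2)
      fix x
      have "cmod (f x) \<le> 1 + (cmod (f x))^2"
      proof (cases "cmod (f x) \<le> 1")
        case True then show ?thesis by (smt (verit) zero_le_power2)
      next
        case False then have "cmod (f x) \<le> cmod (f x) * cmod (f x)" by (simp add: mult_le_cancel_left1)
        then show ?thesis by (simp add: power2_eq_square)
      qed
      then show "norm (f x) \<le> norm (1 + (cmod (f x))^2)" by simp
    qed
  qed
qed

lemma ip_zero_all:
  assumes fm[measurable]: "f \<in> borel_measurable \<mu>" and f2: "integrable \<mu> (\<lambda>x. (cmod (f x))^2)"
    and orth: "\<forall>l\<in>LL. (\<integral>x. f x * cnj (exp_fun l x) \<partial>\<mu>) = 0"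
  shows "(\<integral>x. f x * cnj (exp_fun \<xi> x) \<partial>\<mu>) = 0"
proof -
  interpret real_distribution \<mu> by (rule rd)
  have fi: "integrable \<mu> f" by (rule L2_integrable[OF fm f2])
  have fem: "(\<lambda>x. f x * cnj (exp_fun l x)) \<in> borel_measurable \<mu>" for l by measurable
  have fe: "integrable \<mu> (\<lambda>x. f x * cnj (exp_fun l x))" for l
    by (rule Bochner_Integration.integrable_bound[OF fi fem]) (auto simp: norm_mult)
  define c where "c l = char \<mu> (2*pi*(\<xi> - l))" for l
  define h where "h n x = exp_fun \<xi> x - (\<Sum>l\<in>Lam n. c l * exp_fun l x)" for n x
  have hm[measurable]: "h n \<in> borel_measurable \<mu>" for n unfolding h_def by measurable
  define F where "F = (\<integral>x. (cmod (f x))^2 \<partial>\<mu>)"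
  define I where "I n = (\<integral>x. (cmod (h n x))^2 \<partial>\<mu>)" for n
  define v where "v = cmod (\<integral>x. f x * cnj (exp_fun \<xi> x) \<partial>\<mu>)"
  have LL_sub: "Lam n \<subseteq> LL" for n unfolding LL_def by auto
  have I_eq: "I n = 1 - (\<Sum>l\<in>Lam n. Bc (2*pi*\<xi> - 2*pi*l))" for n
  proof -
    have "I n = 1 - (\<Sum>l\<in>Lam n. (cmod (char \<mu> (2*pi*(\<xi> - l))))^2)"
      unfolding I_def h_def c_def by (rule norm_h[OF Lam_finite LL_sub])
    also have "(\<Sum>l\<in>Lam n. (cmod (char \<mu> (2*pi*(\<xi> - l))))^2) = (\<Sum>l\<in>Lam n. Bc (2*pi*\<xi> - 2*pi*l))"
      unfolding Bc_def by (simp add: algebra_simps)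
    finally show ?thesis .
  qed
  have I_lim: "I \<longlonglongrightarrow> 0"
  proof -
    have "(\<lambda>n. 1 - (\<Sum>l\<in>Lam n. Bc (2*pi*\<xi> - 2*pi*l))) \<longlonglongrightarrow> 1 - 1"
      by (intro tendsto_diff tendsto_const Q_one)
    then show ?thesis unfolding I_eq by simp
  qed
  have ip_h: "(\<integral>x. f x * cnj (h n x) \<partial>\<mu>) = (\<integral>x. f x * cnj (exp_fun \<xi> x) \<partial>\<mu>)" for n
  proof -
    have "(\<lambda>x. f x * cnj (h n x)) = (\<lambda>x. f x * cnj (exp_fun \<xi> x) - (\<Sum>l\<in>Lam n. cnj (c l) * (f x * cnj (exp_fun l x))))"
      unfolding h_def by (auto simp: algebra_simps sum_distrib_left)
    then have "(\<integral>x. f x * cnj (h n x) \<partial>\<mu>) = (\<integral>x. f x * cnj (exp_fun \<xi> x) \<partial>\<mu>) - (\<Sum>l\<in>Lam n. cnj (c l) * (\<integral>x. f x * cnj (exp_fun l x) \<partial>\<mu>))"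
      using fe by (simp add: Bochner_Integration.integral_sum)
    also have "(\<Sum>l\<in>Lam n. cnj (c l) * (\<integral>x. f x * cnj (exp_fun l x) \<partial>\<mu>)) = 0"
    proof (rule sum.neutral, rule ballI)
      fix l assume "l \<in> Lam n"
      then have "l \<in> LL" using LL_sub by blast
      then show "cnj (c l) * (\<integral>x. f x * cnj (exp_fun l x) \<partial>\<mu>) = 0" using orth by simp
    qed
    finally show ?thesis by simp
  qed
  have hbound: "cmod (h n x) \<le> 1 + (\<Sum>l\<in>Lam n. cmod (c l))" for n x
  proof -
    have "cmod (h n x) \<le> cmod (exp_fun \<xi> x) + cmod (\<Sum>l\<in>Lam n. c l * exp_fun l x)"
      unfolding h_def by (rule norm_triangle_ineq4)
    also have "cmod (\<Sum>l\<in>Lam n. c l * exp_fun l x) \<le> (\<Sum>l\<in>Lam n. cmod (c l * exp_fun l x))"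
      by (rule norm_sum)
    finally show ?thesis by (simp add: norm_mult)
  qed
  have h2i: "integrable \<mu> (\<lambda>x. (cmod (h n x))^2)" for n
  proof (rule integrable_const_bound[where B="(1 + (\<Sum>l\<in>Lam n. cmod (c l)))^2"])
    show "AE x in \<mu>. norm ((cmod (h n x))^2) \<le> (1 + (\<Sum>l\<in>Lam n. cmod (c l)))^2"
      using hbound by (auto intro!: power_mono)
  qed simp
  have key: "v \<le> (t/2) * F + I n / (2*t)" if t: "t > 0" for t n
  proof -
    have pt: "cmod (f x * cnj (h n x)) \<le> (t/2) * (cmod (f x))^2 + (cmod (h n x))^2 / (2*t)" for x
    proof -
      have "0 \<le> (t * cmod (f x) - cmod (h n x))^2 / (2*t)" using t by simp
      then have "cmod (f x) * cmod (h n x) \<le> (t/2) * (cmod (f x))^2 + (cmod (h n x))^2 / (2*t)"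
        using t by (simp add: field_simps power2_eq_square)
      then show ?thesis by (simp add: norm_mult)
    qed
    have "v = cmod (\<integral>x. f x * cnj (h n x) \<partial>\<mu>)" unfolding v_def ip_h ..
    also have "\<dots> \<le> (\<integral>x. cmod (f x * cnj (h n x)) \<partial>\<mu>)" by (rule integral_norm_bound)
    also have "\<dots> \<le> (\<integral>x. (t/2) * (cmod (f x))^2 + (cmod (h n x))^2 / (2*t) \<partial>\<mu>)"
    proof (rule integral_mono)
      show "integrable \<mu> (\<lambda>x. (t/2) * (cmod (f x))^2 + (cmod (h n x))^2 / (2*t))"
        using f2 h2i by simp
      show "integrable \<mu> (\<lambda>x. cmod (f x * cnj (h n x)))"
      proof (rule Bochner_Integration.integrable_bound[where f="\<lambda>x. (t/2) * (cmod (f x))^2 + (cmod (h n x))^2 / (2*t)"])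
        show "integrable \<mu> (\<lambda>x. (t/2) * (cmod (f x))^2 + (cmod (h n x))^2 / (2*t))"
          using f2 h2i by simp
        show "(\<lambda>x. cmod (f x * cnj (h n x))) \<in> borel_measurable \<mu>" by measurable
        show "AE x in \<mu>. norm (cmod (f x * cnj (h n x))) \<le> norm ((t/2) * (cmod (f x))^2 + (cmod (h n x))^2 / (2*t))"
        proof (rule AE_I2)
          fix x
          have "cmod (f x * cnj (h n x)) \<le> (t/2) * (cmod (f x))^2 + (cmod (h n x))^2 / (2*t)" by (rule pt)
          also have "\<dots> \<le> norm ((t/2) * (cmod (f x))^2 + (cmod (h n x))^2 / (2*t))" by simp
          finally show "norm (cmod (f x * cnj (h n x))) \<le> norm ((t/2) * (cmod (f x))^2 + (cmod (h n x))^2 / (2*t))" by simp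
        qed
      qed
      show "cmod (f x * cnj (h n x)) \<le> (t/2) * (cmod (f x))^2 + (cmod (h n x))^2 / (2*t)" for x
        by (rule pt)
    qed
    also have "\<dots> = (t/2) * F + I n / (2*t)"
      unfolding F_def I_def using f2 h2i by simp
    finally show ?thesis .
  qed
  have vt: "v \<le> (t/2) * F" if t: "t > 0" for t
  proof -
    have "(\<lambda>n. (t/2) * F + I n / (2*t)) \<longlonglongrightarrow> (t/2) * F + 0 / (2*t)"
      using t by (intro tendsto_intros I_lim) auto
    then show ?thesis using key[OF t] by (intro tendsto_lowerbound) (auto simp: eventually_sequentially)
  qed
  have F0: "F \<ge> 0" unfolding F_def by simp
  have "v \<le> 0"
  proof (rule ccontr)
    assume "\<not> v \<le> 0"
    then have vp: "v > 0" by simp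
    have "v \<le> (v / (F + 1) / 2) * F" using vt[of "v / (F + 1)"] vp F0 by simp
    also have "\<dots> < v"
    proof -
      have "F * v \<ge> 0" using vp F0 by simp
      then have "0 < F * v + v * 2" using vp by linarith
      then show ?thesis using vp F0 by (simp add: field_simps)
    qed
    finally show False by simp
  qed
  then show ?thesis unfolding v_def by simp
qed

end




lemma fourier_zero_real:
  fixes M :: "real measure" and g :: "real \<Rightarrow> real"
  assumes rdM: "real_distribution M" and gi: "integrable M g"
    and z: "\<And>t. (\<integral>x. complex_of_real (g x) * iexp (t * x) \<partial>M) = 0"
  shows "AE x in M. g x = 0"
proof -
  interpret real_distribution M by (rule rdM)
  have gm_meas[measurable]: "g \<in> borel_measurable M" using gi by (rule borel_measurable_integrable)
  define gp where "gp x = max (g x) 0" for x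
  define gn where "gn x = max (- g x) 0" for x
  have gp_meas[measurable]: "gp \<in> borel_measurable M" unfolding gp_def by measurable
  have gn_meas[measurable]: "gn \<in> borel_measurable M" unfolding gn_def by measurable
  have gpi: "integrable M gp" unfolding gp_def using gi by auto
  have gni: "integrable M gn" unfolding gn_def using gi by auto
  have gpn: "g x = gp x - gn x" for x unfolding gp_def gn_def by simp
  have gp0: "gp x \<ge> 0" for x unfolding gp_def by simp
  have gn0: "gn x \<ge> 0" for x unfolding gn_def by simp
  have eq0: "gp x = gn x \<Longrightarrow> g x = 0" for x unfolding gp_def gn_def by (cases "g x \<ge> 0") auto
  have int0: "(\<integral>x. g x \<partial>M) = 0"
  proof -
    have "complex_of_real (\<integral>x. g x \<partial>M) = (\<integral>x. complex_of_real (g x) * iexp (0 * x) \<partial>M)" by simp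
    then show ?thesis using z[of 0] by simp
  qed
  have ab: "(\<integral>x. gp x \<partial>M) = (\<integral>x. gn x \<partial>M)"
  proof -
    have "(\<integral>x. g x \<partial>M) = (\<integral>x. gp x \<partial>M) - (\<integral>x. gn x \<partial>M)"
      unfolding gpn using gpi gni by simp
    then show ?thesis using int0 by simp
  qed
  define a where "a = (\<integral>x. gp x \<partial>M)"
  have a0: "a \<ge> 0" unfolding a_def using gp0 by simp
  show ?thesis
  proof (cases "a = 0")
    case True
    have "AE x in M. gp x = 0" using True gpi gp0 unfolding a_def
      by (subst integral_nonneg_eq_0_iff_AE[symmetric]) auto
    moreover have "AE x in M. gn x = 0" using True gni gn0 ab unfolding a_def
      by (subst integral_nonneg_eq_0_iff_AE[symmetric]) auto
    ultimately show ?thesis by eventually_elim (simp add: gpn)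
  next
    case False
    then have apos: "a > 0" using a0 by simp
    define M1 where "M1 = density M (\<lambda>x. ennreal (gp x / a))"
    define M2 where "M2 = density M (\<lambda>x. ennreal (gn x / a))"
    have rd_dens: "real_distribution (density M (\<lambda>x. ennreal (h x / a)))"
      if hm[measurable]: "h \<in> borel_measurable M" and hi: "integrable M h" and h0: "\<And>x. h x \<ge> 0"
        and ha: "(\<integral>x. h x \<partial>M) = a" for h
    proof -
      have "emeasure (density M (\<lambda>x. ennreal (h x / a))) (space (density M (\<lambda>x. ennreal (h x / a)))) = 1"
      proof -
        have "emeasure (density M (\<lambda>x. ennreal (h x / a))) (space M) = (\<integral>\<^sup>+ x. ennreal (h x / a) * indicator (space M) x \<partial>M)"
          by (rule emeasure_density) auto
        also have "\<dots> = (\<integral>\<^sup>+ x. ennreal (h x / a) \<partial>M)"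
          by (rule nn_integral_cong) auto
        also have "\<dots> = ennreal (\<integral>x. h x / a \<partial>M)"
          by (rule nn_integral_eq_integral) (use hi h0 apos in auto)
        also have "\<dots> = 1" using ha apos by simp
        finally show ?thesis by simp
      qed
      then have "prob_space (density M (\<lambda>x. ennreal (h x / a)))" by (rule prob_spaceI)
      then show ?thesis unfolding real_distribution_def real_distribution_axioms_def by simp
    qed
    have rd1: "real_distribution M1" unfolding M1_def
      by (rule rd_dens) (use gpi gp0 in \<open>auto simp: a_def\<close>)
    have rd2: "real_distribution M2" unfolding M2_def
      by (rule rd_dens) (use gni gn0 ab in \<open>auto simp: a_def\<close>)
    have char_dens: "char (density M (\<lambda>x. ennreal (h x / a))) t = (\<integral>x. (h x / a) *\<^sub>R iexp (t * x) \<partial>M)"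
      if hm[measurable]: "h \<in> borel_measurable M" and h0: "\<And>x. h x \<ge> 0" for h t
      unfolding char_def by (rule integral_density) (use h0 apos in auto)
    have "char M1 = char M2"
    proof
      fix t
      have i1: "integrable M (\<lambda>x. (gp x / a) *\<^sub>R iexp (t * x))"
        by (rule Bochner_Integration.integrable_bound[where f="\<lambda>x. gp x / a"]) (use gpi gp0 apos in auto)
      have i2: "integrable M (\<lambda>x. (gn x / a) *\<^sub>R iexp (t * x))"
        by (rule Bochner_Integration.integrable_bound[where f="\<lambda>x. gn x / a"]) (use gni gn0 apos in auto)
      have "char M1 t - char M2 t = (\<integral>x. (gp x / a) *\<^sub>R iexp (t * x) - (gn x / a) *\<^sub>R iexp (t * x) \<partial>M)"
        unfolding M1_def M2_def char_dens[OF gp_meas gp0] char_dens[OF gn_meas gn0]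
        using i1 i2 by simp
      also have "\<dots> = (\<integral>x. complex_of_real (1/a) * (complex_of_real (g x) * iexp (t * x)) \<partial>M)"
        by (rule Bochner_Integration.integral_cong) (auto simp: gpn scaleR_conv_of_real algebra_simps diff_divide_distrib)
      also have "\<dots> = 0" using z[of t] by simp
      finally show "char M1 t = char M2 t" by simp
    qed
    then have "M1 = M2" using Levy_uniqueness[OF rd1 rd2] by simp
    then have "AE x in M. ennreal (gp x / a) = ennreal (gn x / a)"
      unfolding M1_def M2_def
    proof (subst (asm) finite_density_unique)
      have "(\<integral>\<^sup>+ x. ennreal (gp x / a) \<partial>M) = ennreal (\<integral>x. gp x / a \<partial>M)"
        by (rule nn_integral_eq_integral) (use gpi gp0 apos in auto)
      then show "(\<integral>\<^sup>+ x. ennreal (gp x / a) \<partial>M) \<noteq> \<infinity>" by simp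
    qed auto
    then show ?thesis
    proof eventually_elim
      fix x assume "ennreal (gp x / a) = ennreal (gn x / a)"
      then have "gp x / a = gn x / a" using gp0[of x] gn0[of x] apos by (simp add: ennreal_inj)
      then have "gp x = gn x" using apos by simp
      then show "g x = 0" by (rule eq0)
    qed
  qed
qed




lemma fourier_zero_complex:
  fixes M :: "real measure" and f :: "real \<Rightarrow> complex"
  assumes rdM: "real_distribution M" and fi: "integrable M f"
    and z: "\<And>t. (\<integral>x. f x * iexp (t * x) \<partial>M) = 0"
  shows "AE x in M. f x = 0"
proof -
  interpret real_distribution M by (rule rdM)
  have fm[measurable]: "f \<in> borel_measurable M" using fi by (rule borel_measurable_integrable)
  have ie[measurable]: "(\<lambda>x. iexp (t * x)) \<in> borel_measurable M" for t by measurable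
  have fie: "integrable M (\<lambda>x. f x * iexp (t * x))" for t
    by (rule Bochner_Integration.integrable_bound[OF fi]) (auto simp: norm_mult)
  have cfie: "integrable M (\<lambda>x. cnj (f x) * iexp (t * x))" for t
    by (rule Bochner_Integration.integrable_bound[OF fi]) (auto simp: norm_mult)
  have zc: "(\<integral>x. cnj (f x) * iexp (t * x) \<partial>M) = 0" for t
  proof -
    have fe: "(\<lambda>x. cnj (f x) * iexp (t * x)) = (\<lambda>x. cnj (f x * iexp ((-t) * x)))"
      by (rule ext) (simp only: complex_cnj_mult iexp_cis cis_cnj, simp)
    have "(\<integral>x. cnj (f x) * iexp (t * x) \<partial>M) = cnj (\<integral>x. f x * iexp ((-t) * x) \<partial>M)"
      unfolding fe by (rule Bochner_Integration.integral_cnj)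
    then show ?thesis using z[of "-t"] by simp
  qed
  have re: "AE x in M. Re (f x) = 0"
  proof (rule fourier_zero_real[OF rdM])
    show "integrable M (\<lambda>x. Re (f x))" using fi by (rule integrable_bounded_linear[OF bounded_linear_Re])
    fix t
    have "(\<lambda>x. complex_of_real (Re (f x)) * iexp (t * x)) = (\<lambda>x. (1/2) * (f x * iexp (t * x)) + (1/2) * (cnj (f x) * iexp (t * x)))"
    proof
      fix x
      have "complex_of_real (Re (f x)) = (f x + cnj (f x)) / 2" using complex_add_cnj[of "f x"] by simp
      then show "complex_of_real (Re (f x)) * iexp (t * x) = (1/2) * (f x * iexp (t * x)) + (1/2) * (cnj (f x) * iexp (t * x))"
        by (simp add: algebra_simps add_divide_distrib)
    qed
    then show "(\<integral>x. complex_of_real (Re (f x)) * iexp (t * x) \<partial>M) = 0"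
      using fie[of t] cfie[of t] z[of t] zc[of t] by simp
  qed
  have im: "AE x in M. Im (f x) = 0"
  proof (rule fourier_zero_real[OF rdM])
    show "integrable M (\<lambda>x. Im (f x))" using fi by (rule integrable_bounded_linear[OF bounded_linear_Im])
    fix t
    have "(\<lambda>x. complex_of_real (Im (f x)) * iexp (t * x)) = (\<lambda>x. (-\<i>/2) * (f x * iexp (t * x)) + (\<i>/2) * (cnj (f x) * iexp (t * x)))"
    proof
      fix x
      have h: "complex_of_real (Im (f x)) = (-\<i>/2) * (f x - cnj (f x))"
        by (simp add: complex_eq_iff)
      show "complex_of_real (Im (f x)) * iexp (t * x) = (-\<i>/2) * (f x * iexp (t * x)) + (\<i>/2) * (cnj (f x) * iexp (t * x))"
        unfolding h by (simp only: ring_distribs mult.assoc) simp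
    qed
    then show "(\<integral>x. complex_of_real (Im (f x)) * iexp (t * x) \<partial>M) = 0"
      using fie[of t] cfie[of t] z[of t] zc[of t] by simp
  qed
  from re im show ?thesis by eventually_elim (simp add: complex_eq_iff)
qed

context moran_mu
begin

lemma completeness:
  assumes fm[measurable]: "f \<in> borel_measurable \<mu>" and f2: "integrable \<mu> (\<lambda>x. (cmod (f x))^2)"
    and orth: "\<forall>l\<in>LL. (\<integral>x. f x * cnj (exp_fun l x) \<partial>\<mu>) = 0"
  shows "AE x in \<mu>. f x = 0"
proof (rule fourier_zero_complex[OF rd])
  show "integrable \<mu> f" by (rule L2_integrable[OF fm f2])
  fix t
  have "(\<lambda>x. f x * iexp (t * x)) = (\<lambda>x. f x * cnj (exp_fun (- (t / (2*pi))) x))"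
  proof
    fix x
    have e: "2 * pi * (t / (2*pi) * x) = t * x" by (simp add: field_simps)
    have "cnj (exp_fun (- (t / (2*pi))) x) = exp_fun (t / (2*pi)) x" using cnj_exp_fun by simp
    also have "\<dots> = cis (t * x)" unfolding exp_fun_cis e ..
    finally show "f x * iexp (t * x) = f x * cnj (exp_fun (- (t / (2*pi))) x)"
      by (simp only: iexp_cis)
  qed
  then show "(\<integral>x. f x * iexp (t * x) \<partial>\<mu>) = 0" using ip_zero_all[OF fm f2 orth] by simp
qed

lemma spectral: "spectral_measure \<mu>"
  unfolding spectral_measure_def exp_orthogonal_basis_def
proof (intro conjI exI[of _ LL])
  show "prob_space \<mu>" using rd by (simp add: real_distribution_def)
  show "countable LL" by (rule LL_countable)
  show "\<forall>l\<in>LL. \<forall>l'\<in>LL. l \<noteq> l' \<longrightarrow> (\<integral>x. exp_fun l x * cnj (exp_fun l' x) \<partial>\<mu>) = 0"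
    by (rule orth_part)
  show "\<forall>f. f \<in> borel_measurable \<mu> \<and> integrable \<mu> (\<lambda>x. (cmod (f x))\<^sup>2) \<and>
        (\<forall>l\<in>LL. (\<integral>x. f x * cnj (exp_fun l x) \<partial>\<mu>) = 0) \<longrightarrow> (AE x in \<mu>. f x = 0)"
    using completeness by blast
qed

end




lemma k_le_fact: "k \<ge> 1 \<Longrightarrow> real (Suc k) \<le> 2 * fact k"
proof (induction k)
  case 0 then show ?case by simp
next
  case (Suc k)
  show ?case
  proof (cases "k = 0")
    case True then show ?thesis by simp
  next
    case False
    then have "real (Suc k) \<le> 2 * fact k" using Suc by simp
    moreover have "(1::real) \<le> fact k" by simp
    ultimately have "real (Suc (Suc k)) \<le> 2 * fact k + 2 * fact k" by simp
    also have "\<dots> \<le> 2 * (real (Suc k) * fact k)"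
      using False by (simp add: algebra_simps)
    finally show ?thesis by (simp add: fact_Suc)
  qed
qed

lemma sq_fact: "k \<ge> 1 \<Longrightarrow> real k^2 \<le> 2 * fact k"
proof (induction k)
  case 0 then show ?case by simp
next
  case (Suc k)
  show ?case
  proof (cases "k = 0")
    case True then show ?thesis by simp
  next
    case False
    have "real (Suc k)^2 = real (Suc k) * real (Suc k)" by (simp add: power2_eq_square)
    also have "\<dots> \<le> real (Suc k) * (2 * fact k)"
      using k_le_fact[of k] False by (intro mult_left_mono) auto
    also have "\<dots> = 2 * fact (Suc k)" by (simp add: fact_Suc)
    finally show ?thesis .
  qed
qed

lemma Dg_PP: "k \<ge> 1 \<Longrightarrow> Dg k / PP k \<le> 8 * (1/3)^k"
proof -
  assume k: "k \<ge> 1"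
  have "Dg k \<le> 8 * fact k" using Dg_le[OF k] sq_fact[OF k] by linarith
  then have "Dg k / PP k \<le> (8 * fact k) / PP k" using PP_pos[of k] by (intro divide_right_mono) auto
  also have "\<dots> = 8 * (1/3)^k" by (simp add: PP_def power_one_over)
  finally show ?thesis .
qed

lemma Dg_nonneg: "Dg k \<ge> 0" by (simp add: Dg_def)

lemma norm_iexp_minus_1: "cmod (iexp x - 1) \<le> \<bar>x\<bar>"
  using iexp_approx1[of x 0] by simp

lemma mm_minus_1:
  assumes "k \<ge> 1"
  shows "cmod (mm k u - 1) \<le> Dg k * \<bar>u\<bar>"
proof -
  have D: "Dg k \<ge> 4" using Dg_ge assms by simp
  have e: "mm k u - 1 = ((iexp (2*u) - 1) + (iexp (Dg k * u) - 1)) / 3" by (simp add: mm_def field_simps)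
  have "cmod (mm k u - 1) = cmod ((iexp (2*u) - 1) + (iexp (Dg k * u) - 1)) / 3"
    unfolding e by (simp add: norm_divide)
  also have "\<dots> \<le> (cmod (iexp (2*u) - 1) + cmod (iexp (Dg k * u) - 1)) / 3"
    by (intro divide_right_mono norm_triangle_ineq) simp
  finally have "cmod (mm k u - 1) \<le> (cmod (iexp (2*u) - 1) + cmod (iexp (Dg k * u) - 1)) / 3" .
  also have "\<dots> \<le> (\<bar>2*u\<bar> + \<bar>Dg k * u\<bar>) / 3"
    using norm_iexp_minus_1[of "2*u"] norm_iexp_minus_1[of "Dg k * u"] by (intro divide_right_mono add_mono) auto
  also have "\<dots> \<le> Dg k * \<bar>u\<bar>"
  proof -
    have "\<bar>2*u\<bar> \<le> Dg k * \<bar>u\<bar>" using D by (simp add: abs_mult mult_right_mono)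
    moreover have "\<bar>Dg k * u\<bar> = Dg k * \<bar>u\<bar>" using D by (simp add: abs_mult)
    moreover have "Dg k * \<bar>u\<bar> \<ge> 0" using D by simp
    ultimately have "\<bar>2*u\<bar> + \<bar>Dg k * u\<bar> \<le> 3 * (Dg k * \<bar>u\<bar>)" by linarith
    then show ?thesis by simp
  qed
  finally show ?thesis .
qed

context moran
begin

lemma char_convergent: "convergent (\<lambda>n. char (moran_conv p D n) t)"
proof -
  define f where "f i = mm (Suc i) (t / PP (Suc i))" for i
  have b: "norm (f i - 1) \<le> 8 * \<bar>t\<bar> * (1/3)^(Suc i)" for i
  proof -
    have "norm (f i - 1) \<le> Dg (Suc i) * \<bar>t / PP (Suc i)\<bar>" unfolding f_def by (rule mm_minus_1) simp
    also have "\<dots> = (Dg (Suc i) / PP (Suc i)) * \<bar>t\<bar>" using PP_pos[of "Suc i"] by (simp add: abs_divide)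
    also have "\<dots> \<le> (8 * (1/3)^(Suc i)) * \<bar>t\<bar>" using Dg_PP[of "Suc i"] by (intro mult_right_mono) auto
    finally show ?thesis by (simp add: mult_ac)
  qed
  have "summable (\<lambda>i. 8 * \<bar>t\<bar> * (1/3::real)^(Suc i))"
    by (intro summable_mult summable_Suc_iff[THEN iffD2] summable_geometric) simp
  then have "summable (\<lambda>i. norm (f i - 1))"
    by (rule summable_comparison_test'[where N=0]) (use b in auto)
  then have "convergent_prod f"
    by (intro abs_convergent_prod_imp_convergent_prod summable_imp_abs_convergent_prod)
  then have L: "(\<lambda>n. \<Prod>i\<le>n. f i) \<longlonglongrightarrow> prodinf f" by (rule convergent_prod_LIMSEQ)
  have "(\<Prod>i\<le>n. f i) = char (moran_conv p D (Suc n)) t" for n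
  proof -
    have "char (moran_conv p D (Suc n)) t = (\<Prod>k=1..Suc n. mm k (t / PP k))" using moran_conv_char by blast
    also have "\<dots> = (\<Prod>k=Suc 0..Suc n. mm k (t / PP k))" by simp
    also have "\<dots> = (\<Prod>i=0..n. f i)" unfolding f_def by (rule prod.shift_bounds_cl_Suc_ivl)
    also have "\<dots> = (\<Prod>i\<le>n. f i)" by (simp add: atLeast0AtMost)
    finally show ?thesis by simp
  qed
  then have "(\<lambda>n. char (moran_conv p D (Suc n)) t) \<longlonglongrightarrow> prodinf f" using L by (simp del: moran_conv.simps)
  then have "(\<lambda>n. char (moran_conv p D n) t) \<longlonglongrightarrow> prodinf f" by (rule LIMSEQ_imp_Suc)
  then show ?thesis by (auto simp: convergent_def)
qed

end




lemma AE_delta_set: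
  assumes "finite A" "A \<noteq> {}"
  shows "AE x in delta_set A. x \<in> A"
  unfolding delta_set_def
proof (subst AE_distr_iff)
  show "(\<lambda>x. x) \<in> measurable (uniform_count_measure A) borel" by simp
  show "{x \<in> space borel. x \<in> A} \<in> sets borel" using assms by (simp add: borel_closed finite_imp_closed)
  show "AE x in uniform_count_measure A. x \<in> A"
    using AE_space[of "uniform_count_measure A"] by (simp add: space_uniform_count_measure)
qed

lemma AE_convolution_interval:
  assumes rM: "real_distribution M" and rN: "real_distribution N"
    and aM: "AE x in M. 0 \<le> x \<and> x \<le> a" and aN: "AE y in N. 0 \<le> y \<and> y \<le> b"
  shows "AE z in convolution M N. 0 \<le> z \<and> z \<le> a + b"
proof -
  interpret M: real_distribution M by fact
  interpret N: real_distribution N by fact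
  interpret MN: pair_prob_space M N ..
  have "AE w in M \<Otimes>\<^sub>M N. 0 \<le> fst w + snd w \<and> fst w + snd w \<le> a + b"
  proof (rule MN.AE_pair_measure)
    show "{w \<in> space (M \<Otimes>\<^sub>M N). 0 \<le> fst w + snd w \<and> fst w + snd w \<le> a + b} \<in> sets (M \<Otimes>\<^sub>M N)"
      by measurable
    show "AE x in M. AE y in N. 0 \<le> fst (x, y) + snd (x, y) \<and> fst (x, y) + snd (x, y) \<le> a + b"
      using aM
    proof eventually_elim
      fix x assume x: "0 \<le> x \<and> x \<le> a"
      show "AE y in N. 0 \<le> fst (x, y) + snd (x, y) \<and> fst (x, y) + snd (x, y) \<le> a + b"
        using aN by eventually_elim (use x in auto)
    qed
  qed
  then show ?thesis unfolding convolution_def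
    by (subst AE_distr_iff) (auto simp: case_prod_beta)
qed

lemma geo3_aux: "(S::real) = (1 - q) / 2 \<Longrightarrow> S + q / 3 = (1 - q / 3) / 2"
  by (simp add: field_simps)

lemma geo3: "(\<Sum>k=1..n. (1/3::real)^k) = (1 - (1/3)^n) / 2"
proof (induction n)
  case 0 then show ?case by simp
next
  case (Suc n)
  have e1: "(\<Sum>k=1..Suc n. (1/3::real)^k) = (\<Sum>k=1..n. (1/3::real)^k) + (1/3)^n / 3"
    by (simp add: sum.nat_ivl_Suc')
  have e2: "(1 - (1/3::real)^Suc n) / 2 = (1 - (1/3)^n / 3) / 2" by simp
  show ?case unfolding e1 e2 by (rule geo3_aux[OF Suc.IH])
qed

context moran
begin

definition SS :: "nat \<Rightarrow> real" where "SS n = (\<Sum>k=1..n. Dg k / PP k)"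

lemma SS_le: "SS n \<le> 4"
proof -
  have "SS n \<le> (\<Sum>k=1..n. 8 * (1/3::real)^k)"
    unfolding SS_def by (rule sum_mono) (rule Dg_PP, simp)
  also have "\<dots> = 8 * ((1 - (1/3)^n) / 2)" unfolding sum_distrib_left[symmetric] geo3 ..
  also have "\<dots> \<le> 4" by simp
  finally show ?thesis .
qed

lemma rd_n: "real_distribution (moran_conv p D n)" using moran_conv_char by blast

lemma support: "AE x in moran_conv p D n. 0 \<le> x \<and> x \<le> SS n"
proof (induction n)
  case 0
  have "AE x in return borel (0::real). 0 \<le> x \<and> x \<le> 0" by (subst AE_return) auto
  then show ?case unfolding moran_conv.simps(1) by (simp add: SS_def)
next
  case (Suc n)
  let ?A = "(\<lambda>d. real_of_int d / real (moran_prod p (Suc n))) ` D (Suc n)"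
  have A: "?A = {0, 2 / PP (Suc n), Dg (Suc n) / PP (Suc n)}" by (rule digit_image) simp
  have rdA: "real_distribution (delta_set ?A)" by (rule char_digit(2)) simp
  have aeA: "AE y in delta_set ?A. 0 \<le> y \<and> y \<le> Dg (Suc n) / PP (Suc n)"
  proof -
    have ae: "AE y in delta_set ?A. y \<in> ?A" unfolding A by (rule AE_delta_set) auto
    have f1: "2 / PP (Suc n) \<le> Dg (Suc n) / PP (Suc n)"
      using Dg_ge[of "Suc n"] PP_pos[of "Suc n"] by (intro divide_right_mono) auto
    have f2: "0 \<le> Dg (Suc n) / PP (Suc n)" using Dg_nonneg PP_pos[of "Suc n"] by simp
    from ae show ?thesis unfolding A by eventually_elim (use f1 f2 PP_pos[of "Suc n"] in auto)
  qed
  have "AE x in moran_conv p D (Suc n). 0 \<le> x \<and> x \<le> SS n + Dg (Suc n) / PP (Suc n)"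
    unfolding moran_conv.simps(2) by (rule AE_convolution_interval[OF rd_n rdA Suc.IH aeA])
  then show ?case by (simp add: SS_def sum.nat_ivl_Suc')
qed

lemma tight_mc: "tight (moran_conv p D)"
  unfolding tight_def
proof (intro conjI allI impI)
  show "real_distribution (moran_conv p D n)" for n by (rule rd_n)
  fix e :: real assume e: "e > 0"
  have all: "1 - e < measure (moran_conv p D n) {-1<..5::real}" for n
  proof -
    interpret real_distribution "moran_conv p D n" by (rule rd_n)
    have s4: "SS n \<le> 4" by (rule SS_le)
    from support[of n] have "AE x in moran_conv p D n. x \<in> {-1<..5::real}"
      by eventually_elim (use s4 in auto)
    then have "prob {-1<..5::real} = 1" by (subst prob_eq_1) auto
    then show ?thesis using e by simp
  qed
  show "\<exists>a b. a < b \<and> (\<forall>n. 1 - e < measure (moran_conv p D n) {a<..b})"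
    using all by (intro exI[of _ "-1::real"] exI[of _ "5::real"]) auto
qed

lemma existence: "\<exists>\<mu>. is_cantor_moran_measure p D \<mu>"
proof -
  obtain r M where r: "strict_mono r" and rM: "real_distribution M"
    and wc: "weak_conv_m (moran_conv p D \<circ> id \<circ> r) M"
    using tight_imp_convergent_subsubsequence[OF tight_mc, of id] by (auto simp: strict_mono_def)
  have "(\<lambda>n. char (moran_conv p D n) t) \<longlonglongrightarrow> char M t" for t
  proof -
    obtain L where L: "(\<lambda>n. char (moran_conv p D n) t) \<longlonglongrightarrow> L"
      using char_convergent[of t] by (auto simp: convergent_def)
    have "(\<lambda>n. char ((moran_conv p D \<circ> id \<circ> r) n) t) \<longlonglongrightarrow> char M t"
      by (rule levy_continuity1[OF _ rM wc]) (simp add: rd_n)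
    moreover have "(\<lambda>n. char ((moran_conv p D \<circ> id \<circ> r) n) t) \<longlonglongrightarrow> L"
      using LIMSEQ_subseq_LIMSEQ[OF L r] by (simp add: comp_def)
    ultimately have "L = char M t" by (rule LIMSEQ_unique[rotated])
    then show ?thesis using L by simp
  qed
  then have "weak_conv_m (moran_conv p D) M"
    by (intro levy_continuity rd_n rM)
  then show ?thesis using rM
    by (intro exI[of _ M]) (auto simp: is_cantor_moran_measure_def real_distribution_def real_distribution_axioms_def)
qed

end

theorem mainTheorem5:
  fixes p :: "nat \<Rightarrow> nat" and D :: "nat \<Rightarrow> int set"
  assumes "\<And>n. n \<ge> 1 \<Longrightarrow> p n = 3 * n"
      and "\<And>n. n \<ge> 1 \<Longrightarrow> D n = {0, 2, 3 * int n ^ 2 + 1}"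
  shows "(\<exists>\<mu>. is_cantor_moran_measure p D \<mu>) \<and>
         (\<forall>\<mu>. is_cantor_moran_measure p D \<mu> \<longrightarrow> spectral_measure \<mu>)"
proof -
  interpret moran p D by unfold_locales (use assms in auto)
  show ?thesis
  proof (intro conjI allI impI)
    show "\<exists>\<mu>. is_cantor_moran_measure p D \<mu>" by (rule existence)
    fix \<mu> assume "is_cantor_moran_measure p D \<mu>"
    then interpret moran_mu p D \<mu> by unfold_locales
    show "spectral_measure \<mu>" by (rule spectral)
  qed
qed



end
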